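(* Let $b$ be a finite Blaschke product with $N$ zeros. If $S^{(1)}=\{S^{(1)}_i\}_{i=1}^N$ and $S^{(2)}=\{S^{(2)}_i\}_{i=1}^N$ are Cuntz families on $L^2(\mathbb{T})$ with $\alpha_{S^{(k)}}\circ\pi=\pi\circ\beta$ for $k=1,2$, then there is a unitary matrix $(u_{ij})\in M_N(L^\infty(\mathbb{T}))$ such that $$S^{(2)}_j=\sum_{i=1}^N S^{(1)}_i\pi(u_{ij}),\qquad j=1,\dots,N.$$ Conversely, if $S^{(1)},S^{(2)}$ are Cuntz families on $L^2(\mathbb{T})$ linked by this equation for some unitary $(u_{ij})\in M_N(L^\infty(\mathbb{T}))$, then $\alpha_{S^{(1)}}\circ\pi=\pi\circ\beta$ if and only if $\alpha_{S^{(2)}}\circ\pi=\pi\circ\beta$. Further, in that situation $\alpha_{S^{(1)}}=\alpha_{S^{(2)}}$ on $B(L^2(\mathbb{T}))$ if and only if $(u_{ij})$ is a unitary matrix of constant functions.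
   Context: $b=\prod_{j=1}^N b_{\alpha_j}$ is a finite Blaschke product with $N$ zeros in $\mathbb{D}$ ($b_w(z)=\frac{|w|}{w}\frac{w-z}{1-\overline{w}z}$, $b_0(z)=z$); $\beta(\varphi)=\varphi\circ b$ on $L^\infty(\mathbb{T})$. $\pi(\varphi)$ is multiplication by $\varphi$ on $L^2(\mathbb{T})$. A Cuntz family $\{S_i\}_{i=1}^N$ on a Hilbert space $H$ consists of isometries with $S_i^*S_j=\delta_{ij}I$ and $\sum_iS_iS_i^*=I$, and $\alpha_S(T)=\sum_iS_iTS_i^*$ for $T\in B(H)$. A matrix $U\in M_N(L^\infty(\mathbb{T}))$ is unitary if $UU^*=U^*U=I$. *)

theory Defs
  imports "HOL-Analysis.Analysis"
begin

definition circle_measure :: "complex measure" where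
  "circle_measure = distr (uniform_measure lborel {0..<2*pi}) borel cis"

text \<open>Elements of L2(T) and L-infinity(T) are represented by measurable functions
  complex => complex (representatives); equality is equality almost everywhere.\<close>

definition ae_eq :: "(complex \<Rightarrow> complex) \<Rightarrow> (complex \<Rightarrow> complex) \<Rightarrow> bool" where
  "ae_eq f g \<longleftrightarrow> (AE z in circle_measure. f z = g z)"

definition L2 :: "(complex \<Rightarrow> complex) \<Rightarrow> bool" where
  "L2 f \<longleftrightarrow> f \<in> borel_measurable circle_measure \<and>
     integrable circle_measure (\<lambda>z. (cmod (f z))^2)"

definition Linf :: "(complex \<Rightarrow> complex) \<Rightarrow> bool" where
  "Linf \<phi> \<longleftrightarrow> \<phi> \<in> borel_measurable circle_measure \<and>
     (\<exists>C. AE z in circle_measure. cmod (\<phi> z) \<le> C)"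

definition inner2 :: "(complex \<Rightarrow> complex) \<Rightarrow> (complex \<Rightarrow> complex) \<Rightarrow> complex" where
  "inner2 f g = (LINT z|circle_measure. f z * cnj (g z))"

definition norm2 :: "(complex \<Rightarrow> complex) \<Rightarrow> real" where
  "norm2 f = sqrt (LINT z|circle_measure. (cmod (f z))^2)"

type_synonym op = "(complex \<Rightarrow> complex) \<Rightarrow> (complex \<Rightarrow> complex)"

definition bounded_op :: "op \<Rightarrow> bool" where
  "bounded_op T \<longleftrightarrow>
     (\<forall>f. L2 f \<longrightarrow> L2 (T f)) \<and>
     (\<forall>f g. L2 f \<longrightarrow> L2 g \<longrightarrow> ae_eq f g \<longrightarrow> ae_eq (T f) (T g)) \<and>
     (\<forall>f g c. L2 f \<longrightarrow> L2 g \<longrightarrow>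
         ae_eq (T (\<lambda>z. c * f z + g z)) (\<lambda>z. c * T f z + T g z)) \<and>
     (\<exists>C. \<forall>f. L2 f \<longrightarrow> norm2 (T f) \<le> C * norm2 f)"

definition op_eq :: "op \<Rightarrow> op \<Rightarrow> bool" where
  "op_eq T1 T2 \<longleftrightarrow> (\<forall>f. L2 f \<longrightarrow> ae_eq (T1 f) (T2 f))"

definition adj :: "op \<Rightarrow> op" where
  "adj T = (SOME T'. bounded_op T' \<and>
      (\<forall>f g. L2 f \<longrightarrow> L2 g \<longrightarrow> inner2 (T f) g = inner2 f (T' g)))"

definition zero_op :: op where "zero_op = (\<lambda>f z. 0)"

definition isometry :: "op \<Rightarrow> bool" where
  "isometry S \<longleftrightarrow> (\<forall>f. L2 f \<longrightarrow> norm2 (S f) = norm2 f)"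

definition cuntz_family :: "nat \<Rightarrow> (nat \<Rightarrow> op) \<Rightarrow> bool" where
  "cuntz_family N S \<longleftrightarrow>
     (\<forall>i<N. bounded_op (S i) \<and> isometry (S i)) \<and>
     (\<forall>i<N. \<forall>j<N. op_eq (adj (S i) \<circ> S j) (if i = j then id else zero_op)) \<and>
     op_eq (\<lambda>f z. \<Sum>i<N. S i (adj (S i) f) z) id"

definition alphaS :: "nat \<Rightarrow> (nat \<Rightarrow> op) \<Rightarrow> op \<Rightarrow> op" where
  "alphaS N S T = (\<lambda>f z. \<Sum>i<N. S i (T (adj (S i) f)) z)"

definition mult_op :: "(complex \<Rightarrow> complex) \<Rightarrow> op" where
  "mult_op \<phi> = (\<lambda>f z. \<phi> z * f z)"

definition blaschke_factor :: "complex \<Rightarrow> complex \<Rightarrow> complex" where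
  "blaschke_factor w z =
     (if w = 0 then z else (of_real (cmod w) / w) * ((w - z) / (1 - cnj w * z)))"

definition blaschke :: "nat \<Rightarrow> (nat \<Rightarrow> complex) \<Rightarrow> complex \<Rightarrow> complex" where
  "blaschke N a z = (\<Prod>j<N. blaschke_factor (a j) z)"

definition beta :: "nat \<Rightarrow> (nat \<Rightarrow> complex) \<Rightarrow> (complex \<Rightarrow> complex) \<Rightarrow> (complex \<Rightarrow> complex)" where
  "beta N a \<phi> = \<phi> \<circ> blaschke N a"

definition intertwines :: "nat \<Rightarrow> (nat \<Rightarrow> op) \<Rightarrow> (nat \<Rightarrow> complex) \<Rightarrow> bool" where
  "intertwines N S a \<longleftrightarrow>
     (\<forall>\<phi>. Linf \<phi> \<longrightarrow> op_eq (alphaS N S (mult_op \<phi>)) (mult_op (beta N a \<phi>)))"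

definition unitary_Linf :: "nat \<Rightarrow> (nat \<Rightarrow> nat \<Rightarrow> complex \<Rightarrow> complex) \<Rightarrow> bool" where
  "unitary_Linf N u \<longleftrightarrow>
     (\<forall>i<N. \<forall>j<N. Linf (u i j)) \<and>
     (\<forall>i<N. \<forall>j<N. ae_eq (\<lambda>z. \<Sum>k<N. u i k z * cnj (u j k z)) (\<lambda>z. if i = j then 1 else 0)) \<and>
     (\<forall>i<N. \<forall>j<N. ae_eq (\<lambda>z. \<Sum>k<N. cnj (u k i z) * u k j z) (\<lambda>z. if i = j then 1 else 0))"

definition constant_matrix :: "nat \<Rightarrow> (nat \<Rightarrow> nat \<Rightarrow> complex \<Rightarrow> complex) \<Rightarrow> bool" where
  "constant_matrix N u \<longleftrightarrow> (\<exists>c. \<forall>i<N. \<forall>j<N. ae_eq (u i j) (\<lambda>z. c i j))"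

definition linked :: "nat \<Rightarrow> (nat \<Rightarrow> op) \<Rightarrow> (nat \<Rightarrow> op) \<Rightarrow> (nat \<Rightarrow> nat \<Rightarrow> complex \<Rightarrow> complex) \<Rightarrow> bool" where
  "linked N S1 S2 u \<longleftrightarrow>
     (\<forall>j<N. op_eq (S2 j) (\<lambda>f z. \<Sum>i<N. S1 i (mult_op (u i j) f) z))"

end

theory Submission
  imports Defs "HOL-Probability.Probability_Measure"
begin



lemma cis_meas: "cis \<in> borel_measurable borel"
  by (intro borel_measurable_continuous_onI continuous_intros)

lemma prob_circle: "prob_space circle_measure"
  unfolding circle_measure_def
  by (intro prob_space.prob_space_distr prob_space_uniform_measure)
     (auto simp: measurable_cong_sets[OF sets_uniform_measure refl] cis_meas)

lemma sets_circle[simp, measurable_cong]: "sets circle_measure = sets borel"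
  by (simp add: circle_measure_def)

lemma space_circle[simp]: "space circle_measure = UNIV"
  by (simp add: circle_measure_def)

interpretation C: prob_space circle_measure by (rule prob_circle)

abbreviation "M \<equiv> circle_measure"

lemma borel_M_iff: "f \<in> borel_measurable M \<longleftrightarrow> f \<in> borel_measurable borel"
  by (subst measurable_cong_sets[OF sets_circle refl, of borel]) (rule refl)

lemma meas_M: "f \<in> borel_measurable borel \<Longrightarrow> f \<in> borel_measurable M"
  by (simp add: borel_M_iff)

lemma borel_measurable_cnj'[measurable]:
  "f \<in> borel_measurable N \<Longrightarrow> (\<lambda>x. cnj (f x)) \<in> borel_measurable N"
  by (rule borel_measurable_continuous_on[where f=cnj]) (auto intro: continuous_intros)

lemma L2_iff: "L2 f \<longleftrightarrow> f \<in> borel_measurable borel \<and> integrable M (\<lambda>z. (cmod (f z))^2)"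
  by (simp add: L2_def borel_M_iff)

lemma L2_meas: "L2 f \<Longrightarrow> f \<in> borel_measurable borel"
  by (simp add: L2_iff)

lemma L2_int: "L2 f \<Longrightarrow> integrable M (\<lambda>z. (cmod (f z))^2)"
  by (simp add: L2_iff)

lemma L2_I:
  assumes "f \<in> borel_measurable borel" "g \<in> borel_measurable borel" "integrable M g"
    "\<And>z. (cmod (f z))^2 \<le> g z"
  shows "L2 f"
  unfolding L2_iff
proof (intro conjI assms(1) Bochner_Integration.integrable_bound[OF assms(3)])
  show "(\<lambda>z. (cmod (f z))\<^sup>2) \<in> borel_measurable M" using assms(1) by measurable
  show "AE x in M. norm ((cmod (f x))\<^sup>2) \<le> norm (g x)"
    using assms(4) by (auto intro!: order_trans[OF _ abs_ge_self])
qed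

lemma sq_sum_le: "(x + y)^2 \<le> 2*x^2 + 2*(y::real)^2"
proof -
  have "(x + y)^2 + (x - y)^2 = 2*x^2 + 2*y^2" by (simp add: power2_eq_square algebra_simps)
  moreover have "0 \<le> (x - y)^2" by simp
  ultimately show ?thesis by linarith
qed

lemma prod_le_sq: "0 \<le> x \<Longrightarrow> 0 \<le> y \<Longrightarrow> x * y \<le> x^2 + (y::real)^2"
proof -
  assume "0 \<le> x" "0 \<le> y"
  then have "0 \<le> x * y" by simp
  moreover have "(x - y)^2 = x^2 + y^2 - 2 * x * y" by (simp add: power2_eq_square algebra_simps)
  moreover have "0 \<le> (x - y)^2" by simp
  ultimately show ?thesis by linarith
qed

lemma L2_add_scale:
  assumes f: "L2 f" and g: "L2 g"
  shows "L2 (\<lambda>z. c * f z + g z)"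
proof (rule L2_I[where g="\<lambda>z. 2 * (cmod c)^2 * (cmod (f z))^2 + 2 * (cmod (g z))^2"])
  show "(\<lambda>z. c * f z + g z) \<in> borel_measurable borel" using L2_meas[OF f] L2_meas[OF g] by measurable
  show "(\<lambda>z. 2 * (cmod c)^2 * (cmod (f z))^2 + 2 * (cmod (g z))^2) \<in> borel_measurable borel"
    using L2_meas[OF f] L2_meas[OF g] by measurable
  show "integrable M (\<lambda>z. 2 * (cmod c)^2 * (cmod (f z))^2 + 2 * (cmod (g z))^2)"
    using L2_int[OF f] L2_int[OF g] by auto
  fix z
  have "cmod (c * f z + g z) \<le> cmod c * cmod (f z) + cmod (g z)"
    by (metis norm_mult norm_triangle_ineq)
  then have "(cmod (c * f z + g z))^2 \<le> (cmod c * cmod (f z) + cmod (g z))^2"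
    by (intro power_mono) auto
  also have "\<dots> \<le> 2 * (cmod c * cmod (f z))^2 + 2 * (cmod (g z))^2"
    by (rule sq_sum_le)
  finally have "(cmod (c * f z + g z))^2 \<le> 2 * (cmod c * cmod (f z))^2 + 2 * (cmod (g z))^2" .
  then show "(cmod (c * f z + g z))^2 \<le> 2 * (cmod c)^2 * (cmod (f z))^2 + 2 * (cmod (g z))^2"
    by (simp add: power_mult_distrib)
qed

lemma L2_zero[simp]: "L2 (\<lambda>z. 0)"
  by (simp add: L2_iff)

lemma L2_const[simp]: "L2 (\<lambda>z. c)"
  by (simp add: L2_iff)

lemma L2_add: "L2 f \<Longrightarrow> L2 g \<Longrightarrow> L2 (\<lambda>z. f z + g z)"
  using L2_add_scale[of f g 1] by simp

lemma L2_scale: "L2 f \<Longrightarrow> L2 (\<lambda>z. c * f z)"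
  using L2_add_scale[of f "\<lambda>z. 0" c] by simp

lemma L2_minus: "L2 f \<Longrightarrow> L2 g \<Longrightarrow> L2 (\<lambda>z. f z - g z)"
  using L2_add_scale[of g f "-1"] by simp

lemma L2_sum: "(\<And>i. i \<in> I \<Longrightarrow> L2 (F i)) \<Longrightarrow> L2 (\<lambda>z. \<Sum>i\<in>I. F i z)"
proof (induction I rule: infinite_finite_induct)
  case (insert x F) then show ?case by (simp add: L2_add)
qed auto

lemma L2_ae:
  assumes "L2 f" "g \<in> borel_measurable borel" "ae_eq f g"
  shows "L2 g"
proof -
  have "integrable M (\<lambda>z. (cmod (g z))^2)"
  proof (rule integrable_cong_AE_imp[OF L2_int[OF assms(1)]])
    show "(\<lambda>z. (cmod (g z))\<^sup>2) \<in> borel_measurable M" using assms(2) by measurable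
    show "AE x in M. (cmod (f x))\<^sup>2 = (cmod (g x))\<^sup>2" using assms(3) unfolding ae_eq_def by auto
  qed
  then show ?thesis using assms(2) by (simp add: L2_iff)
qed

lemma Linf_meas: "Linf \<phi> \<Longrightarrow> \<phi> \<in> borel_measurable borel"
  by (simp add: Linf_def borel_M_iff)

lemma L2_mult_Linf:
  assumes "Linf \<phi>" "L2 f"
  shows "L2 (\<lambda>z. \<phi> z * f z)"
proof -
  obtain C where C: "AE z in M. cmod (\<phi> z) \<le> C" using assms(1) Linf_def by auto
  have "integrable M (\<lambda>z. (cmod (\<phi> z * f z))^2)"
  proof (rule Bochner_Integration.integrable_bound[of _ "\<lambda>z. C^2 * (cmod (f z))^2"])
    show "integrable M (\<lambda>z. C^2 * (cmod (f z))^2)" using L2_int[OF assms(2)] by auto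
    show "(\<lambda>z. (cmod (\<phi> z * f z))\<^sup>2) \<in> borel_measurable M"
      using Linf_meas[OF assms(1)] L2_meas[OF assms(2)] by measurable
    show "AE x in M. norm ((cmod (\<phi> x * f x))\<^sup>2) \<le> norm (C\<^sup>2 * (cmod (f x))\<^sup>2)"
      using C
    proof eventually_elim
      case (elim z)
      have "(cmod (\<phi> z * f z))^2 = (cmod (\<phi> z))^2 * (cmod (f z))^2" by (simp add: norm_mult power_mult_distrib)
      also have "\<dots> \<le> C^2 * (cmod (f z))^2"
        by (intro mult_right_mono power_mono elim) auto
      finally show ?case by simp
    qed
  qed
  moreover have "(\<lambda>z. \<phi> z * f z) \<in> borel_measurable borel"
    using Linf_meas[OF assms(1)] L2_meas[OF assms(2)] by measurable
  ultimately show ?thesis by (simp add: L2_iff)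
qed

lemma Linf_L2: "Linf \<phi> \<Longrightarrow> L2 \<phi>"
  using L2_mult_Linf[of \<phi> "\<lambda>z. 1"] by simp

lemma L2_integrable_prod:
  assumes "L2 f" "L2 g"
  shows "integrable M (\<lambda>z. f z * cnj (g z))"
proof (rule Bochner_Integration.integrable_bound[of _ "\<lambda>z. (cmod (f z))^2 + (cmod (g z))^2"])
  show "integrable M (\<lambda>z. (cmod (f z))^2 + (cmod (g z))^2)" using L2_int[OF assms(1)] L2_int[OF assms(2)] by auto
  show "(\<lambda>z. f z * cnj (g z)) \<in> borel_measurable M" using L2_meas[OF assms(1)] L2_meas[OF assms(2)] by measurable
  show "AE x in M. norm (f x * cnj (g x)) \<le> norm ((cmod (f x))\<^sup>2 + (cmod (g x))\<^sup>2)"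
  proof (intro AE_I2)
    fix x
    have "cmod (f x) * cmod (g x) \<le> (cmod (f x))^2 + (cmod (g x))^2"
      by (rule prod_le_sq) auto
    then show "norm (f x * cnj (g x)) \<le> norm ((cmod (f x))\<^sup>2 + (cmod (g x))\<^sup>2)"
      by (simp add: norm_mult)
  qed
qed

lemma L2_integrable: "L2 f \<Longrightarrow> integrable M f"
  using L2_integrable_prod[of f "\<lambda>z. 1"] by simp




lemma inner2_add_scale:
  assumes "L2 f" "L2 g" "L2 h"
  shows "inner2 (\<lambda>z. c * f z + g z) h = c * inner2 f h + inner2 g h"
proof -
  have "inner2 (\<lambda>z. c * f z + g z) h = (LINT z|M. c * (f z * cnj (h z)) + g z * cnj (h z))"
    unfolding inner2_def by (simp add: algebra_simps)
  also have "\<dots> = c * inner2 f h + inner2 g h"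
    unfolding inner2_def using L2_integrable_prod[OF assms(1,3)] L2_integrable_prod[OF assms(2,3)]
    by simp
  finally show ?thesis .
qed

lemma inner2_cnj: "inner2 g f = cnj (inner2 f g)"
  unfolding inner2_def by (subst Bochner_Integration.integral_cnj[symmetric]) (simp add: mult.commute)

lemma inner2_add_scale2:
  assumes "L2 f" "L2 g" "L2 h"
  shows "inner2 h (\<lambda>z. c * f z + g z) = cnj c * inner2 h f + inner2 h g"
proof -
  have "inner2 h (\<lambda>z. c * f z + g z) = cnj (inner2 (\<lambda>z. c * f z + g z) h)" by (rule inner2_cnj)
  also have "\<dots> = cnj (c * inner2 f h + inner2 g h)" using inner2_add_scale[OF assms, of c] by simp
  also have "\<dots> = cnj c * cnj (inner2 f h) + cnj (inner2 g h)" by simp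
  also have "\<dots> = cnj c * inner2 h f + inner2 h g" using inner2_cnj[of h f] inner2_cnj[of h g] by simp
  finally show ?thesis .
qed

lemma inner2_add1: "L2 f \<Longrightarrow> L2 g \<Longrightarrow> L2 h \<Longrightarrow> inner2 (\<lambda>z. f z + g z) h = inner2 f h + inner2 g h"
  using inner2_add_scale[of f g h 1] by simp

lemma inner2_scale1: "L2 f \<Longrightarrow> L2 h \<Longrightarrow> inner2 (\<lambda>z. c * f z) h = c * inner2 f h"
  using inner2_add_scale[of f "\<lambda>z. 0" h c] by (simp add: inner2_def)

lemma inner2_minus1: "L2 f \<Longrightarrow> L2 g \<Longrightarrow> L2 h \<Longrightarrow> inner2 (\<lambda>z. f z - g z) h = inner2 f h - inner2 g h"
  using inner2_add_scale[of g f h "-1"] by (simp add: algebra_simps)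

lemma inner2_add2: "L2 f \<Longrightarrow> L2 g \<Longrightarrow> L2 h \<Longrightarrow> inner2 h (\<lambda>z. f z + g z) = inner2 h f + inner2 h g"
  using inner2_add_scale2[of f g h 1] by simp

lemma inner2_scale2: "L2 f \<Longrightarrow> L2 h \<Longrightarrow> inner2 h (\<lambda>z. c * f z) = cnj c * inner2 h f"
  using inner2_add_scale2[of f "\<lambda>z. 0" h c] by (simp add: inner2_def)

lemma inner2_minus2: "L2 f \<Longrightarrow> L2 g \<Longrightarrow> L2 h \<Longrightarrow> inner2 h (\<lambda>z. f z - g z) = inner2 h f - inner2 h g"
  using inner2_add_scale2[of g f h "-1"] by (simp add: algebra_simps)

lemma inner2_sum1:
  assumes "\<And>i. i \<in> I \<Longrightarrow> L2 (F i)" "L2 h"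
  shows "inner2 (\<lambda>z. \<Sum>i\<in>I. F i z) h = (\<Sum>i\<in>I. inner2 (F i) h)"
  using assms(1)
proof (induction I rule: infinite_finite_induct)
  case (insert x I)
  then show ?case by (simp add: inner2_add1 L2_sum assms(2))
qed (auto simp: inner2_def)

lemma inner2_sum2:
  assumes "\<And>i. i \<in> I \<Longrightarrow> L2 (F i)" "L2 h"
  shows "inner2 h (\<lambda>z. \<Sum>i\<in>I. F i z) = (\<Sum>i\<in>I. inner2 h (F i))"
proof -
  have "inner2 h (\<lambda>z. \<Sum>i\<in>I. F i z) = cnj (inner2 (\<lambda>z. \<Sum>i\<in>I. F i z) h)" by (rule inner2_cnj)
  also have "\<dots> = (\<Sum>i\<in>I. cnj (inner2 (F i) h))" using inner2_sum1[of I F h, OF assms] by simp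
  also have "\<dots> = (\<Sum>i\<in>I. inner2 h (F i))" using inner2_cnj[of h] by simp
  finally show ?thesis .
qed

lemma inner2_ae1:
  assumes "L2 f" "L2 f'" "L2 h" "ae_eq f f'"
  shows "inner2 f h = inner2 f' h"
proof -
  have [measurable]: "f \<in> borel_measurable borel" "f' \<in> borel_measurable borel" "h \<in> borel_measurable borel"
    using assms L2_meas by auto
  show ?thesis unfolding inner2_def
    by (intro integral_cong_AE) (measurable, use assms(4) in \<open>auto simp: ae_eq_def elim!: AE_mp\<close>)
qed

lemma inner2_ae2:
  assumes "L2 f" "L2 f'" "L2 h" "ae_eq f f'"
  shows "inner2 h f = inner2 h f'"
  using inner2_ae1[OF assms] inner2_cnj[of h f] inner2_cnj[of h f'] by simp

lemma inner2_mult: "inner2 (\<lambda>z. \<phi> z * f z) g = inner2 f (\<lambda>z. cnj (\<phi> z) * g z)"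
  unfolding inner2_def by (simp add: algebra_simps)

lemma norm2_nonneg: "0 \<le> norm2 f"
  by (simp add: norm2_def)

lemma inner2_self:
  assumes "L2 f"
  shows "inner2 f f = complex_of_real ((norm2 f)^2)"
proof -
  have "\<And>z. f z * cnj (f z) = complex_of_real ((cmod (f z))^2)"
    by (rule complex_norm_square[symmetric])
  then have "inner2 f f = (LINT z|M. complex_of_real ((cmod (f z))^2))"
    unfolding inner2_def by presburger
  also have "\<dots> = complex_of_real (LINT z|M. (cmod (f z))^2)"
    by (rule Bochner_Integration.integral_complex_of_real)
  also have "(LINT z|M. (cmod (f z))^2) = (norm2 f)^2"
    unfolding norm2_def by (simp add: integral_nonneg_AE)
  finally show ?thesis .
qed

lemma norm2_sq: "L2 f \<Longrightarrow> (norm2 f)^2 = (LINT z|M. (cmod (f z))^2)"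
  unfolding norm2_def by (simp add: integral_nonneg_AE)

lemma norm2_ae: "L2 f \<Longrightarrow> L2 g \<Longrightarrow> ae_eq f g \<Longrightarrow> norm2 f = norm2 g"
proof -
  assume a: "L2 f" "L2 g" "ae_eq f g"
  have [measurable]: "f \<in> borel_measurable borel" "g \<in> borel_measurable borel"
    using a L2_meas by auto
  have "(LINT z|M. (cmod (f z))^2) = (LINT z|M. (cmod (g z))^2)"
    by (intro integral_cong_AE) (measurable, use a(3) in \<open>auto simp: ae_eq_def elim!: AE_mp\<close>)
  then show ?thesis unfolding norm2_def by simp
qed

lemma norm2_eq_0:
  assumes "L2 f"
  shows "norm2 f = 0 \<longleftrightarrow> ae_eq f (\<lambda>z. 0)"
proof -
  have "norm2 f = 0 \<longleftrightarrow> (LINT z|M. (cmod (f z))^2) = 0"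
    using norm2_sq[OF assms] norm2_nonneg[of f] by (metis power_eq_0_iff zero_less_numeral)
  also have "\<dots> \<longleftrightarrow> (AE z in M. (cmod (f z))^2 = 0)"
    by (rule integral_nonneg_eq_0_iff_AE) (auto simp: L2_int[OF assms])
  finally show ?thesis by (simp add: ae_eq_def)
qed

lemma ext_inner2:
  assumes "L2 d" "L2 e" "\<And>h. L2 h \<Longrightarrow> inner2 d h = inner2 e h"
  shows "ae_eq d e"
proof -
  have m: "L2 (\<lambda>z. d z - e z)" using assms L2_minus by auto
  have "inner2 (\<lambda>z. d z - e z) (\<lambda>z. d z - e z) = 0"
    using assms(3)[OF m] by (simp add: inner2_minus1 assms m)
  then have "norm2 (\<lambda>z. d z - e z) = 0" using inner2_self[OF m] by simp
  then have "ae_eq (\<lambda>z. d z - e z) (\<lambda>z. 0)" using norm2_eq_0[OF m] by simp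
  then show ?thesis by (simp add: ae_eq_def)
qed

lemma ae_eq_refl[simp]: "ae_eq f f" by (simp add: ae_eq_def)
lemma ae_eq_sym: "ae_eq f g \<Longrightarrow> ae_eq g f" by (simp add: ae_eq_def eq_commute)
lemma ae_eq_trans[trans]: "ae_eq f g \<Longrightarrow> ae_eq g h \<Longrightarrow> ae_eq f h"
  by (auto simp: ae_eq_def elim: AE_mp)

lemma Cauchy_Schwarz2:
  assumes f: "L2 f" and g: "L2 g"
  shows "cmod (inner2 f g) \<le> norm2 f * norm2 g"
proof -
  let ?a = "\<lambda>z. cmod (f z)" and ?b = "\<lambda>z. cmod (g z)"
  have mf: "f \<in> borel_measurable borel" and mg: "g \<in> borel_measurable borel" using f g L2_meas by auto
  have iab: "integrable M (\<lambda>z. ?a z * ?b z)"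
    using integrable_norm[OF L2_integrable_prod[OF f g]] by (simp add: norm_mult)
  have "cmod (inner2 f g) \<le> (LINT z|M. ?a z * ?b z)"
    unfolding inner2_def using integral_norm_bound[of M "\<lambda>z. f z * cnj (g z)"] by (simp add: norm_mult)
  moreover have "(LINT z|M. ?a z * ?b z)^2 \<le> (LINT z|M. (?a z)^2) * (LINT z|M. (?b z)^2)"
  proof -
    have "(\<integral>\<^sup>+z. ennreal (?a z) * ennreal (?b z) \<partial>M)^2 \<le>
          (\<integral>\<^sup>+z. (ennreal (?a z))^2 \<partial>M) * (\<integral>\<^sup>+z. (ennreal (?b z))^2 \<partial>M)"
      by (rule Cauchy_Schwarz_nn_integral) (use mf mg in measurable)
    moreover have "(\<integral>\<^sup>+z. ennreal (?a z) * ennreal (?b z) \<partial>M) = ennreal (LINT z|M. ?a z * ?b z)"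
      using nn_integral_eq_integral[OF iab] by (simp add: ennreal_mult)
    moreover have "(\<integral>\<^sup>+z. (ennreal (?a z))^2 \<partial>M) = ennreal (LINT z|M. (?a z)^2)"
      using nn_integral_eq_integral[OF L2_int[OF f]] by (simp add: ennreal_power)
    moreover have "(\<integral>\<^sup>+z. (ennreal (?b z))^2 \<partial>M) = ennreal (LINT z|M. (?b z)^2)"
      using nn_integral_eq_integral[OF L2_int[OF g]] by (simp add: ennreal_power)
    ultimately have "ennreal ((LINT z|M. ?a z * ?b z)^2) \<le> ennreal ((LINT z|M. (?a z)^2) * (LINT z|M. (?b z)^2))"
      by (simp add: ennreal_power ennreal_mult integral_nonneg_AE)
    then show ?thesis
      by (subst (asm) ennreal_le_iff) (auto intro!: mult_nonneg_nonneg integral_nonneg_AE)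
  qed
  then have "(LINT z|M. ?a z * ?b z) \<le> norm2 f * norm2 g"
    unfolding norm2_def
    by (metis real_le_rsqrt real_sqrt_mult)
  ultimately show ?thesis by linarith
qed

lemma norm2_triangle:
  assumes f: "L2 f" and g: "L2 g"
  shows "norm2 (\<lambda>z. f z + g z) \<le> norm2 f + norm2 g"
proof -
  have s: "L2 (\<lambda>z. f z + g z)" using f g L2_add by auto
  have "(norm2 (\<lambda>z. f z + g z))^2 = Re (inner2 (\<lambda>z. f z + g z) (\<lambda>z. f z + g z))"
    using inner2_self[OF s] by simp
  also have "\<dots> = Re (inner2 f f) + Re (inner2 g g) + 2 * Re (inner2 f g)"
    using f g by (simp add: inner2_add1 inner2_add2 L2_add) (subst inner2_cnj[of g f], simp)
  also have "\<dots> \<le> (norm2 f)^2 + (norm2 g)^2 + 2 * (norm2 f * norm2 g)"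
    using Cauchy_Schwarz2[OF f g] complex_Re_le_cmod[of "inner2 f g"]
    by (simp add: inner2_self f g)
  also have "\<dots> = (norm2 f + norm2 g)^2" by (simp add: power2_eq_square algebra_simps)
  finally show ?thesis
    using norm2_nonneg by (meson add_nonneg_nonneg power2_le_imp_le)
qed

lemma norm2_scale: "L2 f \<Longrightarrow> norm2 (\<lambda>z. c * f z) = cmod c * norm2 f"
  unfolding norm2_def by (simp add: norm_mult power_mult_distrib real_sqrt_mult)

lemma norm2_minus_sym: "norm2 (\<lambda>z. f z - g z) = norm2 (\<lambda>z. g z - f z)"
  unfolding norm2_def by (simp add: norm_minus_commute)




lemma L2_nn:
  assumes "L2 f"
  shows "(\<integral>\<^sup>+z. ennreal ((cmod (f z))^2) \<partial>M) = ennreal ((norm2 f)^2)"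
  using nn_integral_eq_integral[OF L2_int[OF assms]] norm2_sq[OF assms] by simp

lemma L2_from_nn:
  assumes "f \<in> borel_measurable borel" "(\<integral>\<^sup>+z. ennreal ((cmod (f z))^2) \<partial>M) < \<infinity>"
  shows "L2 f"
proof -
  have [measurable]: "f \<in> borel_measurable borel" by fact
  have "integrable M (\<lambda>z. (cmod (f z))^2)"
    using assms(2) by (subst integrable_iff_bounded) auto
  then show ?thesis using assms(1) by (simp add: L2_iff)
qed

lemma norm2_one: "norm2 (\<lambda>z. 1) = 1"
  unfolding norm2_def using C.prob_space by simp

lemma L1_le_L2:
  assumes "L2 f"
  shows "(LINT z|M. cmod (f z)) \<le> norm2 f"
proof -
  have a: "L2 (\<lambda>z. complex_of_real (cmod (f z)))"
    using assms by (auto simp: L2_iff norm_of_real intro: borel_measurable_of_real)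
  have "(LINT z|M. cmod (f z)) = cmod (inner2 (\<lambda>z. complex_of_real (cmod (f z))) (\<lambda>z. 1))"
    unfolding inner2_def by (simp add: integral_nonneg_AE)
  also have "\<dots> \<le> norm2 (\<lambda>z. complex_of_real (cmod (f z))) * norm2 (\<lambda>z. 1)"
    by (rule Cauchy_Schwarz2[OF a]) simp
  also have "\<dots> = norm2 f" by (simp add: norm2_one norm2_def norm_of_real)
  finally show ?thesis .
qed

lemma L2_complete:
  assumes L: "\<And>n. L2 (F n)"
    and Cy: "\<And>e. e > 0 \<Longrightarrow> \<exists>N. \<forall>m\<ge>N. \<forall>n\<ge>N. norm2 (\<lambda>z. F m z - F n z) < e"
  shows "\<exists>g. L2 g \<and> (\<lambda>n. norm2 (\<lambda>z. F n z - g z)) \<longlonglongrightarrow> 0"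
proof -
  have Fm[measurable]: "F n \<in> borel_measurable borel" for n using L L2_meas by auto
  have L1: "\<exists>N. \<forall>i\<ge>N. \<forall>j\<ge>N. (LINT z|M. norm (F i z - F j z)) < e" if e0: "e > 0" for e
  proof -
    obtain N where N: "\<forall>m\<ge>N. \<forall>n\<ge>N. norm2 (\<lambda>z. F m z - F n z) < e" using Cy[OF e0] by auto
    show ?thesis
    proof (intro exI allI impI)
      fix i j assume "i \<ge> N" "j \<ge> N"
      then show "(LINT z|M. norm (F i z - F j z)) < e"
        using L1_le_L2[OF L2_minus[OF L[of i] L[of j]]] N by force
    qed
  qed
  obtain r where r: "strict_mono r" and ae: "AE z in M. Cauchy (\<lambda>i. F (r i) z)"
    using cauchy_L1_AE_cauchy_subseq[of M F] L1 L2_integrable[OF L] by (auto simp: borel_M_iff)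
  define g where "g = (\<lambda>z. lim (\<lambda>i. F (r i) z))"
  have gm[measurable]: "g \<in> borel_measurable borel" unfolding g_def by measurable
  have conv: "AE z in M. (\<lambda>i. F (r i) z) \<longlonglongrightarrow> g z"
    using ae by eventually_elim (simp add: g_def Cauchy_convergent_iff convergent_LIMSEQ_iff)
  have key: "(\<integral>\<^sup>+z. ennreal ((cmod (F n z - g z))^2) \<partial>M) \<le> ennreal (e^2)"
    if e: "e > 0" and N: "\<forall>m\<ge>N. \<forall>n\<ge>N. norm2 (\<lambda>z. F m z - F n z) < e" and n: "n \<ge> N" for e N n
  proof -
    have "(\<integral>\<^sup>+z. ennreal ((cmod (F n z - g z))^2) \<partial>M) =
          (\<integral>\<^sup>+z. liminf (\<lambda>i. ennreal ((cmod (F n z - F (r i) z))^2)) \<partial>M)"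
    proof (intro nn_integral_cong_AE)
      show "AE z in M. ennreal ((cmod (F n z - g z))^2) = liminf (\<lambda>i. ennreal ((cmod (F n z - F (r i) z))^2))"
        using conv
      proof eventually_elim
        case (elim z)
        have "(\<lambda>i. ennreal ((cmod (F n z - F (r i) z))^2)) \<longlonglongrightarrow> ennreal ((cmod (F n z - g z))^2)"
          by (intro tendsto_ennrealI tendsto_intros elim)
        from lim_imp_Liminf[OF trivial_limit_sequentially this] show ?case by simp
      qed
    qed
    also have "\<dots> \<le> liminf (\<lambda>i. \<integral>\<^sup>+z. ennreal ((cmod (F n z - F (r i) z))^2) \<partial>M)"
      by (rule nn_integral_liminf) measurable
    also have "\<dots> \<le> liminf (\<lambda>i. ennreal (e^2))"
    proof (intro Liminf_mono)
      have "eventually (\<lambda>i. r i \<ge> N) sequentially"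
        using r by (meson eventually_sequentiallyI le_trans seq_suble)
      then show "\<forall>\<^sub>F i in sequentially. (\<integral>\<^sup>+z. ennreal ((cmod (F n z - F (r i) z))^2) \<partial>M) \<le> ennreal (e^2)"
      proof eventually_elim
        case (elim i)
        have "(\<integral>\<^sup>+z. ennreal ((cmod (F n z - F (r i) z))^2) \<partial>M) = ennreal ((norm2 (\<lambda>z. F n z - F (r i) z))^2)"
          by (rule L2_nn[OF L2_minus[OF L L]])
        also have "\<dots> \<le> ennreal (e^2)"
          using N n elim by (intro ennreal_leI power_mono) (auto simp: norm2_nonneg less_imp_le)
        finally show ?case .
      qed
    qed
    also have "\<dots> = ennreal (e^2)" by (simp add: Liminf_const)
    finally show ?thesis .
  qed
  obtain N1 where N1: "\<forall>m\<ge>N1. \<forall>n\<ge>N1. norm2 (\<lambda>z. F m z - F n z) < 1" using Cy[of 1] by auto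
  have "L2 (\<lambda>z. F N1 z - g z)"
  proof (rule L2_from_nn)
    show "(\<lambda>z. F N1 z - g z) \<in> borel_measurable borel" by measurable
    have "(\<integral>\<^sup>+z. ennreal ((cmod (F N1 z - g z))^2) \<partial>M) \<le> ennreal (1^2)"
      using key[OF _ N1, of N1] by simp
    also have "\<dots> < \<infinity>" by simp
    finally show "(\<integral>\<^sup>+z. ennreal ((cmod (F N1 z - g z))^2) \<partial>M) < \<infinity>" .
  qed
  from L2_minus[OF L[of N1] this] have gL: "L2 g" by simp
  have "(\<lambda>n. norm2 (\<lambda>z. F n z - g z)) \<longlonglongrightarrow> 0"
  proof (rule LIMSEQ_I)
    fix e :: real assume e: "e > 0"
    obtain N where N: "\<forall>m\<ge>N. \<forall>n\<ge>N. norm2 (\<lambda>z. F m z - F n z) < e/2" using Cy[of "e/2"] e by auto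
    show "\<exists>no. \<forall>n\<ge>no. norm (norm2 (\<lambda>z. F n z - g z) - 0) < e"
    proof (intro exI allI impI)
      fix n assume n: "n \<ge> N"
      have Ln: "L2 (\<lambda>z. F n z - g z)" using L2_minus[OF L gL] .
      have "ennreal ((norm2 (\<lambda>z. F n z - g z))^2) \<le> ennreal ((e/2)^2)"
        using key[OF _ N n] e L2_nn[OF Ln] by simp
      then have "(norm2 (\<lambda>z. F n z - g z))^2 \<le> (e/2)^2"
        by (subst (asm) ennreal_le_iff) auto
      then have "norm2 (\<lambda>z. F n z - g z) \<le> e/2"
        using e norm2_nonneg by (meson less_le power2_le_imp_le zero_le_divide_iff zero_le_numeral)
      then show "norm (norm2 (\<lambda>z. F n z - g z) - 0) < e" using e norm2_nonneg[of "\<lambda>z. F n z - g z"] by simp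
    qed
  qed
  with gL show ?thesis by auto
qed




definition bfun :: "((complex \<Rightarrow> complex) \<Rightarrow> complex) \<Rightarrow> bool" where
  "bfun l \<longleftrightarrow> (\<forall>f g. L2 f \<longrightarrow> L2 g \<longrightarrow> ae_eq f g \<longrightarrow> l f = l g) \<and>
     (\<forall>f g c. L2 f \<longrightarrow> L2 g \<longrightarrow> l (\<lambda>z. c * f z + g z) = c * l f + l g) \<and>
     (\<exists>C. \<forall>f. L2 f \<longrightarrow> cmod (l f) \<le> C * norm2 f)"

lemma bfun_lin: "bfun l \<Longrightarrow> L2 f \<Longrightarrow> L2 g \<Longrightarrow> l (\<lambda>z. c * f z + g z) = c * l f + l g"
  unfolding bfun_def by blast

lemma bfun_ae: "bfun l \<Longrightarrow> L2 f \<Longrightarrow> L2 g \<Longrightarrow> ae_eq f g \<Longrightarrow> l f = l g"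
  unfolding bfun_def by blast

lemma bfun_zero: "bfun l \<Longrightarrow> l (\<lambda>z. 0) = 0"
  using bfun_lin[of l "\<lambda>z. 0" "\<lambda>z. 0" 1] by simp

lemma bfun_scale: "bfun l \<Longrightarrow> L2 f \<Longrightarrow> l (\<lambda>z. c * f z) = c * l f"
  using bfun_lin[of l f "\<lambda>z. 0" c] bfun_zero[of l] by simp

lemma bfun_minus: "bfun l \<Longrightarrow> L2 f \<Longrightarrow> L2 g \<Longrightarrow> l (\<lambda>z. f z - g z) = l f - l g"
  using bfun_lin[of l g f "-1"] by simp

lemma parallelogram:
  assumes f: "L2 f" and g: "L2 g"
  shows "(norm2 (\<lambda>z. f z + g z))^2 + (norm2 (\<lambda>z. f z - g z))^2 = 2 * (norm2 f)^2 + 2 * (norm2 g)^2"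
proof -
  have s: "L2 (\<lambda>z. f z + g z)" "L2 (\<lambda>z. f z - g z)" using f g L2_add L2_minus by auto
  have "complex_of_real ((norm2 (\<lambda>z. f z + g z))^2 + (norm2 (\<lambda>z. f z - g z))^2) =
        inner2 (\<lambda>z. f z + g z) (\<lambda>z. f z + g z) + inner2 (\<lambda>z. f z - g z) (\<lambda>z. f z - g z)"
    using inner2_self[OF s(1)] inner2_self[OF s(2)] by simp
  also have "\<dots> = 2 * inner2 f f + 2 * inner2 g g"
    using f g by (simp add: inner2_add1 inner2_add2 inner2_minus1 inner2_minus2 L2_add L2_minus)
  also have "\<dots> = complex_of_real (2 * (norm2 f)^2 + 2 * (norm2 g)^2)"
    using inner2_self[OF f] inner2_self[OF g] by simp
  finally show ?thesis by (simp only: of_real_eq_iff)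
qed

lemma riesz:
  assumes l: "bfun l"
  shows "\<exists>g. L2 g \<and> (\<forall>f. L2 f \<longrightarrow> l f = inner2 f g)"
proof (cases "\<forall>f. L2 f \<longrightarrow> l f = 0")
  case True
  then show ?thesis by (intro exI[of _ "\<lambda>z. 0"]) (simp add: inner2_def)
next
  case False
  then obtain f1 where f1: "L2 f1" "l f1 \<noteq> 0" by auto
  obtain C where C: "\<And>f. L2 f \<Longrightarrow> cmod (l f) \<le> C * norm2 f" using l unfolding bfun_def by blast
  define K where "K = {f. L2 f \<and> l f = 1}"
  define f0 where "f0 = (\<lambda>z. (1 / l f1) * f1 z)"
  have "l f0 = (1 / l f1) * l f1" unfolding f0_def by (rule bfun_scale[OF l f1(1)])
  moreover have "L2 f0" unfolding f0_def by (rule L2_scale[OF f1(1)])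
  ultimately have f0K: "f0 \<in> K" unfolding K_def using f1 by simp
  define d where "d = Inf (norm2 ` K)"
  have bdd: "bdd_below (norm2 ` K)" by (rule bdd_belowI[of _ 0]) (auto simp: norm2_nonneg)
  have d_le: "d \<le> norm2 f" if "f \<in> K" for f unfolding d_def using bdd that by (simp add: cINF_lower)
  have d0: "0 \<le> d" unfolding d_def using f0K by (intro cINF_greatest) (auto simp: norm2_nonneg)
  have "\<exists>f. f \<in> K \<and> norm2 f < d + 1 / (Suc n)" for n
  proof -
    have "d < d + 1 / Suc n" by simp
    then have "\<exists>x\<in>norm2 ` K. x < d + 1 / Suc n"
      unfolding d_def by (intro cInf_lessD) (use f0K in auto)
    then obtain x where "x \<in> norm2 ` K" "x < d + 1 / Suc n" by blast
    then show ?thesis by auto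
  qed
  then obtain F where FK: "\<And>n. F n \<in> K" and Fn: "\<And>n. norm2 (F n) < d + 1 / Suc n" by metis
  have FL: "L2 (F n)" for n using FK K_def by auto
  have mid: "(norm2 (\<lambda>z. F m z - F n z))^2 \<le> 2 * (norm2 (F m))^2 + 2 * (norm2 (F n))^2 - 4 * d^2" for m n
  proof -
    have L: "L2 (\<lambda>z. (1/2) * (F m z + F n z))" by (rule L2_scale[OF L2_add[OF FL FL]])
    have e1: "l (\<lambda>z. (1/2) * (F m z + F n z)) = (1/2) * l (\<lambda>z. F m z + F n z)"
      by (rule bfun_scale[OF l L2_add[OF FL FL]])
    have e2: "l (\<lambda>z. F m z + F n z) = 2"
      using bfun_lin[OF l FL FL, of 1 m n] FK[of m] FK[of n] by (simp add: K_def)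
    have h: "(\<lambda>z. (1/2) * (F m z + F n z)) \<in> K"
      unfolding K_def mem_Collect_eq by (rule conjI[OF L]) (simp only: e1 e2, simp)
    have "d \<le> norm2 (\<lambda>z. (1/2) * (F m z + F n z))" using d_le[OF h] .
    also have "\<dots> = (1/2) * norm2 (\<lambda>z. F m z + F n z)" using norm2_scale[OF L2_add[OF FL FL], of "1/2"] by simp
    finally have "(2*d)^2 \<le> (norm2 (\<lambda>z. F m z + F n z))^2" using d0 by (intro power_mono) auto
    then show ?thesis using parallelogram[OF FL[of m] FL[of n]] by (simp add: power_mult_distrib)
  qed
  have Cy: "\<exists>N. \<forall>m\<ge>N. \<forall>n\<ge>N. norm2 (\<lambda>z. F m z - F n z) < e" if e: "e > 0" for e
  proof -
    have "0 < min 1 (e^2 / (8 * d + 4))" using e d0 by auto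
    from reals_Archimedean[OF this] obtain N where N: "1 / Suc N < min 1 (e^2 / (8 * d + 4))"
      by (auto simp: inverse_eq_divide)
    show ?thesis
    proof (intro exI allI impI)
      fix m n assume m: "m \<ge> N" and n: "n \<ge> N"
      define \<delta> where "\<delta> = 1 / real (Suc N)"
      have "1 / real (Suc m) \<le> 1 / real (Suc N)" using m by (intro divide_left_mono) auto
      then have dm: "norm2 (F m) < d + \<delta>" using Fn[of m] unfolding \<delta>_def by linarith
      have "1 / real (Suc n) \<le> 1 / real (Suc N)" using n by (intro divide_left_mono) auto
      then have dn: "norm2 (F n) < d + \<delta>" using Fn[of n] unfolding \<delta>_def by linarith
      have \<delta>: "0 < \<delta>" "\<delta> < 1" "\<delta> < e^2 / (8 * d + 4)" using N unfolding \<delta>_def by auto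
      have "(norm2 (F m))^2 \<le> (d + \<delta>)^2" using dm norm2_nonneg by (intro power_mono) auto
      moreover have "(norm2 (F n))^2 \<le> (d + \<delta>)^2" using dn norm2_nonneg by (intro power_mono) auto
      ultimately have "(norm2 (\<lambda>z. F m z - F n z))^2 \<le> 4 * (d + \<delta>)^2 - 4 * d^2"
        using mid[of m n] by linarith
      also have "\<dots> = \<delta> * (8 * d + 4 * \<delta>)" by (simp add: power2_eq_square algebra_simps)
      also have "\<dots> \<le> \<delta> * (8 * d + 4)" using \<delta> d0 by (intro mult_left_mono) auto
      also have "\<dots> < e^2" using \<delta> d0 by (simp add: pos_less_divide_eq)
      finally show "norm2 (\<lambda>z. F m z - F n z) < e"
        using e norm2_nonneg by (meson power_less_imp_less_base less_le)
    qed
  qed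
  obtain g0 where g0: "L2 g0" and lim: "(\<lambda>n. norm2 (\<lambda>z. F n z - g0 z)) \<longlonglongrightarrow> 0"
    using L2_complete[OF FL Cy] by blast
  have lg0: "l g0 = 1"
  proof -
    have "cmod (1 - l g0) \<le> C * norm2 (\<lambda>z. F n z - g0 z)" for n
      using C[OF L2_minus[OF FL[of n] g0]] bfun_minus[OF l FL[of n] g0] FK[of n] by (simp add: K_def)
    moreover have "(\<lambda>n. C * norm2 (\<lambda>z. F n z - g0 z)) \<longlonglongrightarrow> 0"
      using tendsto_mult_right_zero[OF lim] by simp
    ultimately have "cmod (1 - l g0) \<le> 0"
      by (intro LIMSEQ_le_const[of "\<lambda>n. C * norm2 (\<lambda>z. F n z - g0 z)"]) auto
    then show ?thesis by simp
  qed
  have g0K: "g0 \<in> K" using g0 lg0 K_def by simp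
  have ng0: "norm2 g0 \<le> d"
  proof -
    have "norm2 g0 \<le> d + 1 / Suc n + norm2 (\<lambda>z. F n z - g0 z)" for n
    proof -
      have "norm2 g0 = norm2 (\<lambda>z. F n z + (- 1) * (F n z - g0 z))" by simp
      also have "\<dots> \<le> norm2 (F n) + norm2 (\<lambda>z. (- 1) * (F n z - g0 z))"
        by (rule norm2_triangle) (auto intro: FL L2_scale L2_minus g0)
      also have "\<dots> = norm2 (F n) + norm2 (\<lambda>z. F n z - g0 z)"
        using norm2_scale[OF L2_minus[OF FL g0], of "-1"] by simp
      finally show ?thesis using Fn[of n] by linarith
    qed
    moreover have "(\<lambda>n. d + 1 / Suc n + norm2 (\<lambda>z. F n z - g0 z)) \<longlonglongrightarrow> d + 0 + 0"
      by (intro tendsto_intros lim LIMSEQ_Suc[OF lim_inverse_n'] ) 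
    ultimately show ?thesis
      by (intro LIMSEQ_le_const[OF _ ]) auto
  qed
  have orth: "inner2 h g0 = 0" if h: "L2 h" "l h = 0" for h
  proof -
    define a where "a = inner2 h g0"
    have "2 * (cmod a)^2 \<le> t * ((cmod a)^2 * (norm2 h)^2)" if t: "t > 0" for t :: real
    proof -
      define s where "s = complex_of_real t * cnj a"
      have fs: "L2 (\<lambda>z. g0 z - s * h z)" using g0 h L2_minus L2_scale by auto
      have "(\<lambda>z. g0 z - s * h z) \<in> K"
        using fs bfun_minus[OF l g0 L2_scale[OF h(1)]] bfun_scale[OF l h(1)] lg0 h by (simp add: K_def)
      then have "d \<le> norm2 (\<lambda>z. g0 z - s * h z)" by (rule d_le)
      then have le: "(norm2 g0)^2 \<le> (norm2 (\<lambda>z. g0 z - s * h z))^2"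
        using ng0 norm2_nonneg[of g0] by (intro power_mono) auto
      have "complex_of_real ((norm2 (\<lambda>z. g0 z - s * h z))^2) = inner2 (\<lambda>z. g0 z - s * h z) (\<lambda>z. g0 z - s * h z)"
        using inner2_self[OF fs] by simp
      also have "\<dots> = inner2 g0 g0 - cnj s * inner2 g0 h - s * inner2 h g0 + s * cnj s * inner2 h h"
        using g0 h fs L2_scale[OF h(1), of s] by (simp add: inner2_minus1 inner2_minus2 inner2_scale1 inner2_scale2 L2_scale algebra_simps)
      also have "\<dots> = complex_of_real ((norm2 g0)^2 - 2 * t * (cmod a)^2 + t^2 * (cmod a)^2 * (norm2 h)^2)"
        using inner2_self[OF g0] inner2_self[OF h(1)] inner2_cnj[of g0 h]
          cmod_power2[of a, unfolded power2_eq_square]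
        by (simp add: s_def a_def[symmetric] cmod_power2 complex_eq_iff algebra_simps power2_eq_square)
      finally have "(norm2 (\<lambda>z. g0 z - s * h z))^2 = (norm2 g0)^2 - 2 * t * (cmod a)^2 + t^2 * (cmod a)^2 * (norm2 h)^2"
        by (simp only: of_real_eq_iff)
      with le have "(norm2 g0)^2 \<le> (norm2 g0)^2 - 2 * t * (cmod a)^2 + t^2 * (cmod a)^2 * (norm2 h)^2"
        by simp
      then have "t * (2 * (cmod a)^2) \<le> t * (t * ((cmod a)^2 * (norm2 h)^2))"
        by (simp add: power2_eq_square algebra_simps)
      then show ?thesis using t by simp
    qed
    then have "2 * (cmod a)^2 \<le> 0"
    proof -
      assume H: "\<And>t. t > 0 \<Longrightarrow> 2 * (cmod a)^2 \<le> t * ((cmod a)^2 * (norm2 h)^2)"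
      have "(\<lambda>n. (1 / Suc n) * ((cmod a)^2 * (norm2 h)^2)) \<longlonglongrightarrow> 0 * ((cmod a)^2 * (norm2 h)^2)"
        by (intro tendsto_intros LIMSEQ_Suc[OF lim_inverse_n'])
      note lim2 = this
      have b: "\<And>n. 2 * (cmod a)^2 \<le> (1 / Suc n) * ((cmod a)^2 * (norm2 h)^2)"
        by (rule H) simp
      from lim2 have "2 * (cmod a)^2 \<le> 0 * ((cmod a)^2 * (norm2 h)^2)"
        by (rule LIMSEQ_le_const) (use b in blast)
      then show ?thesis by simp
    qed
    then show ?thesis by (simp add: a_def)
  qed
  have n0: "norm2 g0 \<noteq> 0"
  proof
    assume "norm2 g0 = 0"
    then have "ae_eq g0 (\<lambda>z. 0)" using norm2_eq_0[OF g0] by simp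
    then have "l g0 = l (\<lambda>z. 0)" using bfun_ae[OF l g0] by simp
    then show False using lg0 bfun_zero[OF l] by simp
  qed
  define g where "g = (\<lambda>z. complex_of_real (1 / (norm2 g0)^2) * g0 z)"
  have gL: "L2 g" unfolding g_def using L2_scale[OF g0] .
  have "l f = inner2 f g" if f: "L2 f" for f
  proof -
    have hL: "L2 (\<lambda>z. f z - l f * g0 z)" using f g0 L2_minus L2_scale by auto
    have "l (\<lambda>z. f z - l f * g0 z) = 0"
      using bfun_minus[OF l f L2_scale[OF g0]] bfun_scale[OF l g0] lg0 by simp
    then have "inner2 (\<lambda>z. f z - l f * g0 z) g0 = 0" using orth hL by blast
    then have "inner2 f g0 = l f * complex_of_real ((norm2 g0)^2)"
      using f g0 by (simp add: inner2_minus1 inner2_scale1 L2_scale inner2_self)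
    moreover have "inner2 f g = cnj (complex_of_real (1 / (norm2 g0)^2)) * inner2 f g0"
      unfolding g_def by (rule inner2_scale2[OF g0 f])
    ultimately show ?thesis using n0 by (simp add: field_simps)
  qed
  with gL show ?thesis by blast
qed




lemma bop_L2: "bounded_op T \<Longrightarrow> L2 f \<Longrightarrow> L2 (T f)"
  unfolding bounded_op_def by blast
lemma bop_ae: "bounded_op T \<Longrightarrow> L2 f \<Longrightarrow> L2 g \<Longrightarrow> ae_eq f g \<Longrightarrow> ae_eq (T f) (T g)"
  unfolding bounded_op_def by blast
lemma bop_lin: "bounded_op T \<Longrightarrow> L2 f \<Longrightarrow> L2 g \<Longrightarrow> ae_eq (T (\<lambda>z. c * f z + g z)) (\<lambda>z. c * T f z + T g z)"
  unfolding bounded_op_def by blast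
lemma bop_bound: "bounded_op T \<Longrightarrow> \<exists>C. \<forall>f. L2 f \<longrightarrow> norm2 (T f) \<le> C * norm2 f"
  unfolding bounded_op_def by blast

lemma bop_zero: "bounded_op T \<Longrightarrow> ae_eq (T (\<lambda>z. 0)) (\<lambda>z. 0)"
  using bop_lin[of T "\<lambda>z. 0" "\<lambda>z. 0" 1] by (simp add: ae_eq_def)

lemma bop_add: "bounded_op T \<Longrightarrow> L2 f \<Longrightarrow> L2 g \<Longrightarrow> ae_eq (T (\<lambda>z. f z + g z)) (\<lambda>z. T f z + T g z)"
  using bop_lin[of T f g 1] by simp

lemma bop_scale: "bounded_op T \<Longrightarrow> L2 f \<Longrightarrow> ae_eq (T (\<lambda>z. c * f z)) (\<lambda>z. c * T f z)"
  using bop_lin[of T f "\<lambda>z. 0" c] bop_zero[of T] by (auto simp: ae_eq_def elim: AE_mp)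

lemma bop_minus: "bounded_op T \<Longrightarrow> L2 f \<Longrightarrow> L2 g \<Longrightarrow> ae_eq (T (\<lambda>z. f z - g z)) (\<lambda>z. T f z - T g z)"
  using bop_lin[of T g f "-1"] by simp

lemma bop_sum:
  assumes T: "bounded_op T" and F: "\<And>i. i \<in> I \<Longrightarrow> L2 (F i)"
  shows "ae_eq (T (\<lambda>z. \<Sum>i\<in>I. F i z)) (\<lambda>z. \<Sum>i\<in>I. T (F i) z)"
  using F
proof (induction I rule: infinite_finite_induct)
  case (infinite A) then show ?case using bop_zero[OF T] by simp
next
  case empty then show ?case using bop_zero[OF T] by simp
next
  case (insert x I)
  have "ae_eq (T (\<lambda>z. \<Sum>i\<in>insert x I. F i z)) (T (\<lambda>z. F x z + (\<Sum>i\<in>I. F i z)))"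
    using insert by simp
  also have "ae_eq \<dots> (\<lambda>z. T (F x) z + T (\<lambda>z. \<Sum>i\<in>I. F i z) z)"
    using insert by (intro bop_add[OF T]) (auto intro: L2_sum)
  also have "ae_eq \<dots> (\<lambda>z. T (F x) z + (\<Sum>i\<in>I. T (F i) z))"
    using insert.IH insert.prems by (auto simp: ae_eq_def elim: AE_mp)
  also have "(\<lambda>z. T (F x) z + (\<Sum>i\<in>I. T (F i) z)) = (\<lambda>z. \<Sum>i\<in>insert x I. T (F i) z)"
    using insert by simp
  finally show ?case by simp
qed

lemma ext_inner2':
  assumes "L2 d" "L2 e" "\<And>h. L2 h \<Longrightarrow> inner2 h d = inner2 h e"
  shows "ae_eq d e"
proof (rule ext_inner2[OF assms(1,2)])
  fix h assume h: "L2 h"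
  have "inner2 d h = cnj (inner2 h d)" by (rule inner2_cnj)
  also have "\<dots> = cnj (inner2 h e)" using assms(3)[OF h] by simp
  also have "\<dots> = inner2 e h" by (rule inner2_cnj[symmetric])
  finally show "inner2 d h = inner2 e h" .
qed

lemma functional_of_op:
  assumes T: "bounded_op T" and g: "L2 g"
  shows "bfun (\<lambda>f. inner2 (T f) g)"
  unfolding bfun_def
proof (intro conjI allI impI)
  fix f f' assume "L2 f" "L2 f'" "ae_eq f f'"
  then show "inner2 (T f) g = inner2 (T f') g"
    using bop_ae[OF T] bop_L2[OF T] g by (intro inner2_ae1) auto
next
  fix f f' c assume f: "L2 f" "L2 f'"
  have "inner2 (T (\<lambda>z. c * f z + f' z)) g = inner2 (\<lambda>z. c * T f z + T f' z) g"
    using f bop_lin[OF T f] g bop_L2[OF T] by (intro inner2_ae1) (auto intro!: L2_add_scale L2_add_scale)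
  also have "\<dots> = c * inner2 (T f) g + inner2 (T f') g"
    using f g bop_L2[OF T] by (intro inner2_add_scale) auto
  finally show "inner2 (T (\<lambda>z. c * f z + f' z)) g = c * inner2 (T f) g + inner2 (T f') g" .
next
  obtain C where C: "\<And>f. L2 f \<Longrightarrow> norm2 (T f) \<le> C * norm2 f" using bop_bound[OF T] by blast
  show "\<exists>C. \<forall>f. L2 f \<longrightarrow> cmod (inner2 (T f) g) \<le> C * norm2 f"
  proof (intro exI[of _ "\<bar>C\<bar> * norm2 g"] allI impI)
    fix f assume f: "L2 f"
    have "cmod (inner2 (T f) g) \<le> norm2 (T f) * norm2 g"
      by (rule Cauchy_Schwarz2[OF bop_L2[OF T f] g])
    also have "\<dots> \<le> (\<bar>C\<bar> * norm2 f) * norm2 g"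
      using C[OF f] norm2_nonneg[of g] norm2_nonneg[of f]
      by (intro mult_right_mono) (auto intro: order_trans abs_ge_self mult_right_mono)
    finally show "cmod (inner2 (T f) g) \<le> \<bar>C\<bar> * norm2 g * norm2 f" by (simp add: algebra_simps)
  qed
qed

lemma adj_exists:
  assumes T: "bounded_op T"
  shows "\<exists>T'. bounded_op T' \<and> (\<forall>f g. L2 f \<longrightarrow> L2 g \<longrightarrow> inner2 (T f) g = inner2 f (T' g))"
proof -
  define T' where "T' = (\<lambda>g. if L2 g then (SOME k. L2 k \<and> (\<forall>f. L2 f \<longrightarrow> inner2 (T f) g = inner2 f k)) else (\<lambda>z. 0))"
  have T'g: "L2 (T' g) \<and> (\<forall>f. L2 f \<longrightarrow> inner2 (T f) g = inner2 f (T' g))" if g: "L2 g" for g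
  proof -
    have ex: "\<exists>k. L2 k \<and> (\<forall>f. L2 f \<longrightarrow> inner2 (T f) g = inner2 f k)"
      using riesz[OF functional_of_op[OF T g]] by blast
    show ?thesis unfolding T'_def if_P[OF g] by (rule someI_ex[OF ex])
  qed
  have "bounded_op T'"
    unfolding bounded_op_def
  proof (intro conjI allI impI)
    fix g assume "L2 g" then show "L2 (T' g)" using T'g by blast
  next
    fix g g' assume g: "L2 g" "L2 g'" "ae_eq g g'"
    show "ae_eq (T' g) (T' g')"
    proof (rule ext_inner2')
      show "L2 (T' g)" "L2 (T' g')" using T'g g by auto
      fix h assume h: "L2 h"
      have "inner2 h (T' g) = inner2 (T h) g" using T'g g h by auto
      also have "\<dots> = inner2 (T h) g'" using g h bop_L2[OF T] by (intro inner2_ae2) auto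
      also have "\<dots> = inner2 h (T' g')" using T'g g h by auto
      finally show "inner2 h (T' g) = inner2 h (T' g')" .
    qed
  next
    fix g g' c assume g: "L2 g" "L2 g'"
    have s: "L2 (\<lambda>z. c * g z + g' z)" using g L2_add_scale by auto
    show "ae_eq (T' (\<lambda>z. c * g z + g' z)) (\<lambda>z. c * T' g z + T' g' z)"
    proof (rule ext_inner2')
      show "L2 (T' (\<lambda>z. c * g z + g' z))" using T'g s by auto
      show "L2 (\<lambda>z. c * T' g z + T' g' z)" using T'g g by (auto intro: L2_add_scale)
      fix h assume h: "L2 h"
      have "inner2 h (T' (\<lambda>z. c * g z + g' z)) = inner2 (T h) (\<lambda>z. c * g z + g' z)" using T'g s h by auto
      also have "\<dots> = cnj c * inner2 (T h) g + inner2 (T h) g'"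
        using g h bop_L2[OF T] by (intro inner2_add_scale2) auto
      also have "\<dots> = cnj c * inner2 h (T' g) + inner2 h (T' g')" using T'g g h by auto
      also have "\<dots> = inner2 h (\<lambda>z. c * T' g z + T' g' z)"
        using T'g g h by (intro inner2_add_scale2[symmetric]) auto
      finally show "inner2 h (T' (\<lambda>z. c * g z + g' z)) = inner2 h (\<lambda>z. c * T' g z + T' g' z)" .
    qed
  next
    obtain C where C: "\<And>f. L2 f \<Longrightarrow> norm2 (T f) \<le> C * norm2 f" using bop_bound[OF T] by blast
    show "\<exists>C. \<forall>f. L2 f \<longrightarrow> norm2 (T' f) \<le> C * norm2 f"
    proof (intro exI[of _ C] allI impI)
      fix g assume g: "L2 g"
      have k: "L2 (T' g)" using T'g g by auto
      have "(norm2 (T' g))^2 = cmod (inner2 (T' g) (T' g))"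
        using inner2_self[OF k] by (simp only: norm_of_real abs_power2)
      also have "inner2 (T' g) (T' g) = cnj (inner2 (T (T' g)) g)"
        using T'g[OF g] k inner2_cnj by metis
      also have "cmod (cnj (inner2 (T (T' g)) g)) \<le> norm2 (T (T' g)) * norm2 g"
        using Cauchy_Schwarz2[OF bop_L2[OF T k] g] by simp
      also have "\<dots> \<le> (C * norm2 (T' g)) * norm2 g"
        using C[OF k] norm2_nonneg[of g] by (intro mult_right_mono) auto
      finally have *: "norm2 (T' g) * norm2 (T' g) \<le> norm2 (T' g) * (C * norm2 g)"
        by (simp add: power2_eq_square algebra_simps)
      show "norm2 (T' g) \<le> C * norm2 g"
      proof (cases "norm2 (T' g) = 0")
        case True
        have "0 \<le> norm2 (T g)" by (rule norm2_nonneg)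
        also have "\<dots> \<le> C * norm2 g" using C[OF g] .
        finally show ?thesis using True by simp
      next
        case False
        then have "0 < norm2 (T' g)" using norm2_nonneg[of "T' g"] by simp
        then show ?thesis using * by (simp add: mult_le_cancel_left_pos)
      qed
    qed
  qed
  then show ?thesis using T'g by (intro exI[of _ T']) auto
qed

lemma adj_prop:
  assumes "bounded_op T"
  shows "bounded_op (adj T) \<and> (\<forall>f g. L2 f \<longrightarrow> L2 g \<longrightarrow> inner2 (T f) g = inner2 f (adj T g))"
  unfolding adj_def using adj_exists[OF assms] by (rule someI_ex)

lemma adj_bop: "bounded_op T \<Longrightarrow> bounded_op (adj T)"
  using adj_prop by blast

lemma adj_inner: "bounded_op T \<Longrightarrow> L2 f \<Longrightarrow> L2 g \<Longrightarrow> inner2 (T f) g = inner2 f (adj T g)"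
  using adj_prop by blast

lemma adj_inner': "bounded_op T \<Longrightarrow> L2 f \<Longrightarrow> L2 g \<Longrightarrow> inner2 (adj T g) f = inner2 g (T f)"
  using adj_inner[of T f g] inner2_cnj by metis

lemma adj_unique:
  assumes T: "bounded_op T" and A: "\<And>g. L2 g \<Longrightarrow> L2 (A g)"
    and H: "\<And>f g. L2 f \<Longrightarrow> L2 g \<Longrightarrow> inner2 (T f) g = inner2 f (A g)" and g: "L2 g"
  shows "ae_eq (adj T g) (A g)"
  by (rule ext_inner2') (use bop_L2[OF adj_bop[OF T] g] A[OF g] adj_inner[OF T _ g] H[OF _ g] in auto)




lemma ae_eq_sum:
  assumes "finite I" "\<And>i. i \<in> I \<Longrightarrow> ae_eq (F i) (G i)"
  shows "ae_eq (\<lambda>z. \<Sum>i\<in>I. F i z) (\<lambda>z. \<Sum>i\<in>I. G i z)"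
proof -
  have "AE z in M. \<forall>i\<in>I. F i z = G i z"
    using assms unfolding ae_eq_def by (intro eventually_ball_finite) auto
  then show ?thesis unfolding ae_eq_def by eventually_elim simp
qed

lemma ae_eq_mult: "ae_eq f g \<Longrightarrow> ae_eq (\<lambda>z. \<phi> z * f z) (\<lambda>z. \<phi> z * g z)"
  unfolding ae_eq_def by (auto elim: AE_mp)

lemma ae_eq_add: "ae_eq f g \<Longrightarrow> ae_eq f' g' \<Longrightarrow> ae_eq (\<lambda>z. f z + f' z) (\<lambda>z. g z + g' z)"
  unfolding ae_eq_def by (auto elim: AE_mp)

lemma ae_eq_op_eq: "op_eq T1 T2 \<Longrightarrow> L2 f \<Longrightarrow> ae_eq (T1 f) (T2 f)"
  unfolding op_eq_def by blast

lemma sum_if_eq: "j < (N::nat) \<Longrightarrow> (\<Sum>i<N. if i = j then F i else (0::'a::comm_monoid_add)) = F j"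
  by (simp add: sum.delta)

lemma sum_if_eq': "j < (N::nat) \<Longrightarrow> (\<Sum>i<N. if j = i then F i else (0::'a::comm_monoid_add)) = F j"
  by (simp add: sum.delta)

lemma ae_const_eq: "ae_eq (\<lambda>z. a) (\<lambda>z. b) \<Longrightarrow> a = b"
  unfolding ae_eq_def using C.AE_const by blast

lemma bop_comp:
  assumes A: "bounded_op A" and B: "bounded_op B"
  shows "bounded_op (\<lambda>f. A (B f))"
  unfolding bounded_op_def
proof (intro conjI allI impI)
  fix f assume "L2 f" then show "L2 (A (B f))" using A B bop_L2 by blast
next
  fix f g assume "L2 f" "L2 g" "ae_eq f g"
  then show "ae_eq (A (B f)) (A (B g))" using A B bop_L2 bop_ae by blast
next
  fix f g c assume f: "L2 f" "L2 g"
  have "ae_eq (A (B (\<lambda>z. c * f z + g z))) (A (\<lambda>z. c * B f z + B g z))"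
    using f bop_lin[OF B f] by (intro bop_ae[OF A]) (auto intro: bop_L2[OF B] L2_add_scale)
  also have "ae_eq \<dots> (\<lambda>z. c * A (B f) z + A (B g) z)"
    using f by (intro bop_lin[OF A]) (auto intro: bop_L2[OF B])
  finally show "ae_eq (A (B (\<lambda>z. c * f z + g z))) (\<lambda>z. c * A (B f) z + A (B g) z)" .
next
  obtain CA where CA: "\<And>f. L2 f \<Longrightarrow> norm2 (A f) \<le> CA * norm2 f" using bop_bound[OF A] by blast
  obtain CB where CB: "\<And>f. L2 f \<Longrightarrow> norm2 (B f) \<le> CB * norm2 f" using bop_bound[OF B] by blast
  show "\<exists>C. \<forall>f. L2 f \<longrightarrow> norm2 (A (B f)) \<le> C * norm2 f"
  proof (intro exI[of _ "\<bar>CA\<bar> * \<bar>CB\<bar>"] allI impI)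
    fix f assume f: "L2 f"
    have "norm2 (A (B f)) \<le> CA * norm2 (B f)" using CA bop_L2[OF B f] by blast
    also have "\<dots> \<le> \<bar>CA\<bar> * norm2 (B f)" using norm2_nonneg by (intro mult_right_mono) auto
    also have "\<dots> \<le> \<bar>CA\<bar> * (\<bar>CB\<bar> * norm2 f)"
    proof (intro mult_left_mono)
      have "CB * norm2 f \<le> \<bar>CB\<bar> * norm2 f" using norm2_nonneg[of f] by (intro mult_right_mono) auto
      then show "norm2 (B f) \<le> \<bar>CB\<bar> * norm2 f" using CB[OF f] by linarith
    qed auto
    finally show "norm2 (A (B f)) \<le> \<bar>CA\<bar> * \<bar>CB\<bar> * norm2 f" by (simp add: algebra_simps)
  qed
qed

lemma cf_bop: "cuntz_family N S \<Longrightarrow> i < N \<Longrightarrow> bounded_op (S i)"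
  unfolding cuntz_family_def by blast

lemma cf_adj_bop: "cuntz_family N S \<Longrightarrow> i < N \<Longrightarrow> bounded_op (adj (S i))"
  using cf_bop adj_bop by blast

lemma cf_orth:
  assumes "cuntz_family N S" "i < N" "j < N" "L2 f"
  shows "ae_eq (adj (S i) (S j f)) (\<lambda>z. if i = j then f z else 0)"
proof -
  have "op_eq (adj (S i) \<circ> S j) (if i = j then id else zero_op)"
    using assms unfolding cuntz_family_def by blast
  then have "ae_eq (adj (S i) (S j f)) ((if i = j then id else zero_op) f)"
    using assms(4) unfolding op_eq_def by auto
  then show ?thesis by (cases "i = j") (auto simp: zero_op_def)
qed

lemma cf_orth_same: "cuntz_family N S \<Longrightarrow> i < N \<Longrightarrow> L2 f \<Longrightarrow> ae_eq (adj (S i) (S i f)) f"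
  using cf_orth[of N S i i f] by simp

lemma cf_sum:
  assumes "cuntz_family N S" "L2 f"
  shows "ae_eq (\<lambda>z. \<Sum>i<N. S i (adj (S i) f) z) f"
  using assms unfolding cuntz_family_def op_eq_def by auto

lemma Linf_bound: "Linf \<phi> \<Longrightarrow> \<exists>C\<ge>0. AE z in M. cmod (\<phi> z) \<le> C"
proof -
  assume "Linf \<phi>"
  then obtain C where "AE z in M. cmod (\<phi> z) \<le> C" unfolding Linf_def by blast
  then have "AE z in M. cmod (\<phi> z) \<le> max C 0" by eventually_elim auto
  then show ?thesis by (intro exI[of _ "max C 0"]) auto
qed

lemma Linf_cnj: "Linf \<phi> \<Longrightarrow> Linf (\<lambda>z. cnj (\<phi> z))"
  unfolding Linf_def by (auto simp: borel_M_iff)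

lemma Linf_mult: "Linf \<phi> \<Longrightarrow> Linf \<psi> \<Longrightarrow> Linf (\<lambda>z. \<phi> z * \<psi> z)"
proof -
  assume a: "Linf \<phi>" "Linf \<psi>"
  obtain C where C: "C \<ge> 0" "AE z in M. cmod (\<phi> z) \<le> C" using Linf_bound[OF a(1)] by blast
  obtain D where D: "D \<ge> 0" "AE z in M. cmod (\<psi> z) \<le> D" using Linf_bound[OF a(2)] by blast
  have "AE z in M. cmod (\<phi> z * \<psi> z) \<le> C * D"
    using C(2) D(2) by eventually_elim (auto simp: norm_mult intro: mult_mono C D)
  moreover have "(\<lambda>z. \<phi> z * \<psi> z) \<in> borel_measurable M"
    using a Linf_def by (auto simp: borel_M_iff)
  ultimately show ?thesis unfolding Linf_def by blast
qed

lemma Linf_diff: "Linf \<phi> \<Longrightarrow> Linf \<psi> \<Longrightarrow> Linf (\<lambda>z. \<phi> z - \<psi> z)"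
proof -
  assume a: "Linf \<phi>" "Linf \<psi>"
  obtain C where C: "C \<ge> 0" "AE z in M. cmod (\<phi> z) \<le> C" using Linf_bound[OF a(1)] by blast
  obtain D where D: "D \<ge> 0" "AE z in M. cmod (\<psi> z) \<le> D" using Linf_bound[OF a(2)] by blast
  have "AE z in M. cmod (\<phi> z - \<psi> z) \<le> C + D"
    using C(2) D(2)
  proof eventually_elim
    case (elim z) then show ?case using norm_triangle_ineq4[of "\<phi> z" "\<psi> z"] by linarith
  qed
  moreover have "(\<lambda>z. \<phi> z - \<psi> z) \<in> borel_measurable M"
    using a Linf_def by (auto simp: borel_M_iff)
  ultimately show ?thesis unfolding Linf_def by blast
qed

lemma Linf_const[simp]: "Linf (\<lambda>z. c)"
  unfolding Linf_def by auto

lemma mult_op_bop: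
  assumes "Linf \<phi>"
  shows "bounded_op (mult_op \<phi>)"
  unfolding bounded_op_def mult_op_def
proof (intro conjI allI impI)
  fix f assume "L2 f" then show "L2 (\<lambda>z. \<phi> z * f z)" using L2_mult_Linf assms by blast
next
  fix f g assume "ae_eq f g" then show "ae_eq (\<lambda>z. \<phi> z * f z) (\<lambda>z. \<phi> z * g z)" by (rule ae_eq_mult)
next
  fix f g c show "ae_eq (\<lambda>z. \<phi> z * (c * f z + g z)) (\<lambda>z. c * (\<phi> z * f z) + \<phi> z * g z)"
    by (simp add: algebra_simps)
next
  obtain C where C: "C \<ge> 0" "AE z in M. cmod (\<phi> z) \<le> C" using Linf_bound[OF assms] by blast
  show "\<exists>C. \<forall>f. L2 f \<longrightarrow> norm2 (\<lambda>z. \<phi> z * f z) \<le> C * norm2 f"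
  proof (intro exI[of _ C] allI impI)
    fix f assume f: "L2 f"
    have "(LINT z|M. (cmod (\<phi> z * f z))^2) \<le> (LINT z|M. C^2 * (cmod (f z))^2)"
    proof (rule integral_mono_AE)
      show "integrable M (\<lambda>z. (cmod (\<phi> z * f z))^2)" using L2_int[OF L2_mult_Linf[OF assms f]] .
      show "integrable M (\<lambda>z. C^2 * (cmod (f z))^2)" using L2_int[OF f] by simp
      show "AE z in M. (cmod (\<phi> z * f z))^2 \<le> C^2 * (cmod (f z))^2"
        using C(2) by eventually_elim (auto simp: norm_mult power_mult_distrib intro!: mult_right_mono power_mono)
    qed
    then have "(norm2 (\<lambda>z. \<phi> z * f z))^2 \<le> (C * norm2 f)^2"
      using norm2_sq[OF L2_mult_Linf[OF assms f]] norm2_sq[OF f] by (simp add: power_mult_distrib)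
    then show "norm2 (\<lambda>z. \<phi> z * f z) \<le> C * norm2 f"
      using C(1) norm2_nonneg[of f] by (meson mult_nonneg_nonneg power2_le_imp_le)
  qed
qed




lemma orth_Linf:
  assumes d: "L2 d" and H: "\<And>\<psi>. Linf \<psi> \<Longrightarrow> inner2 d \<psi> = 0"
  shows "ae_eq d (\<lambda>z. 0)"
proof -
  have dm[measurable]: "d \<in> borel_measurable borel" using L2_meas[OF d] .
  have n: "AE z in M. cmod (d z) \<le> real n \<longrightarrow> d z = 0" for n :: nat
  proof -
    define \<psi> where "\<psi> = (\<lambda>z. if cmod (d z) \<le> real n then d z else 0)"
    have \<psi>m[measurable]: "\<psi> \<in> borel_measurable borel" unfolding \<psi>_def by measurable
    have "Linf \<psi>" unfolding Linf_def
      by (intro conjI exI[of _ "real n"]) (auto simp: \<psi>_def borel_M_iff)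
    then have "inner2 d \<psi> = 0" by (rule H)
    moreover have "d z * cnj (\<psi> z) = complex_of_real (if cmod (d z) \<le> real n then (cmod (d z))^2 else 0)" for z
    proof -
      have pt: "d z * cnj (d z) = complex_of_real ((cmod (d z))^2)" by (rule complex_norm_square[symmetric])
      show ?thesis by (cases "cmod (d z) \<le> real n") (simp_all add: \<psi>_def pt)
    qed
    ultimately have "complex_of_real (LINT z|M. (if cmod (d z) \<le> real n then (cmod (d z))^2 else 0)) = 0"
      unfolding inner2_def by (simp only: Bochner_Integration.integral_complex_of_real)
    then have i0: "(LINT z|M. (if cmod (d z) \<le> real n then (cmod (d z))^2 else 0)) = 0" by simp
    have "integrable M (\<lambda>z. if cmod (d z) \<le> real n then (cmod (d z))^2 else 0)"
      by (rule Bochner_Integration.integrable_bound[OF L2_int[OF d]]) auto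
    then have "AE z in M. (if cmod (d z) \<le> real n then (cmod (d z))^2 else 0) = 0"
      using i0 by (subst (asm) integral_nonneg_eq_0_iff_AE) auto
    then show ?thesis by eventually_elim (auto split: if_splits)
  qed
  have "AE z in M. \<forall>n::nat. cmod (d z) \<le> real n \<longrightarrow> d z = 0"
    unfolding AE_all_countable using n by blast
  then show ?thesis unfolding ae_eq_def
  proof eventually_elim
    case (elim z)
    obtain n :: nat where "cmod (d z) \<le> real n" using real_arch_simple by blast
    then show ?case using elim by blast
  qed
qed

definition commutes_Linf :: "op \<Rightarrow> bool" where
  "commutes_Linf X \<longleftrightarrow> (\<forall>\<phi> f. Linf \<phi> \<longrightarrow> L2 f \<longrightarrow> ae_eq (X (\<lambda>z. \<phi> z * f z)) (\<lambda>z. \<phi> z * X f z))"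

lemma commutes_one:
  assumes "commutes_Linf X" "Linf \<phi>"
  shows "ae_eq (X \<phi>) (\<lambda>z. \<phi> z * X (\<lambda>z. 1) z)"
proof -
  have "ae_eq (X (\<lambda>z. \<phi> z * 1)) (\<lambda>z. \<phi> z * X (\<lambda>z. 1) z)"
  proof -
    have H: "\<forall>\<phi> f. Linf \<phi> \<longrightarrow> L2 f \<longrightarrow> ae_eq (X (\<lambda>z. \<phi> z * f z)) (\<lambda>z. \<phi> z * X f z)"
      using assms(1) unfolding commutes_Linf_def .
    have "Linf \<phi> \<longrightarrow> L2 (\<lambda>z::complex. 1::complex) \<longrightarrow> ae_eq (X (\<lambda>z. \<phi> z * 1)) (\<lambda>z. \<phi> z * X (\<lambda>z. 1) z)"
      using H by blast
    then show ?thesis using assms(2) by simp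
  qed
  then show ?thesis by simp
qed

lemma commutes_Linf_gen:
  assumes X: "bounded_op X" and cX: "commutes_Linf X"
  shows "Linf (X (\<lambda>z. 1))"
proof -
  define g where "g = X (\<lambda>z. 1)"
  have gL: "L2 g" unfolding g_def by (rule bop_L2[OF X]) simp
  have gm[measurable]: "g \<in> borel_measurable borel" using L2_meas[OF gL] .
  obtain C0 where C0: "\<And>f. L2 f \<Longrightarrow> norm2 (X f) \<le> C0 * norm2 f" using bop_bound[OF X] by blast
  define C where "C = max C0 0"
  have C: "\<And>f. L2 f \<Longrightarrow> norm2 (X f) \<le> C * norm2 f" "C \<ge> 0"
  proof -
    fix f assume f: "L2 f"
    have "C0 * norm2 f \<le> C * norm2 f" unfolding C_def using norm2_nonneg[of f] by (intro mult_right_mono) auto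
    then show "norm2 (X f) \<le> C * norm2 f" using C0[OF f] by linarith
  qed (simp add: C_def)
  define \<phi> where "\<phi> = (\<lambda>z. if C < cmod (g z) then (1::complex) else 0)"
  have \<phi>m[measurable]: "\<phi> \<in> borel_measurable borel" unfolding \<phi>_def by measurable
  have \<phi>L: "Linf \<phi>" unfolding Linf_def by (intro conjI exI[of _ 1]) (auto simp: \<phi>_def borel_M_iff)
  have e: "ae_eq (X \<phi>) (\<lambda>z. \<phi> z * g z)" unfolding g_def by (rule commutes_one[OF cX \<phi>L])
  have pg: "L2 (\<lambda>z. \<phi> z * g z)" using L2_mult_Linf[OF \<phi>L gL] .
  have "norm2 (\<lambda>z. \<phi> z * g z) = norm2 (X \<phi>)"
    using e pg bop_L2[OF X Linf_L2[OF \<phi>L]] by (intro norm2_ae) (auto intro: ae_eq_sym)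
  also have "\<dots> \<le> C * norm2 \<phi>" using C(1)[OF Linf_L2[OF \<phi>L]] .
  finally have "(norm2 (\<lambda>z. \<phi> z * g z))^2 \<le> (C * norm2 \<phi>)^2"
    using norm2_nonneg by (intro power_mono) auto
  then have le: "(LINT z|M. (cmod (\<phi> z * g z))^2) \<le> C^2 * (LINT z|M. (cmod (\<phi> z))^2)"
    using norm2_sq[OF pg] norm2_sq[OF Linf_L2[OF \<phi>L]] by (simp add: power_mult_distrib)
  define h where "h = (\<lambda>z. if C < cmod (g z) then (cmod (g z))^2 - C^2 else 0)"
  have hpt: "h z = (cmod (\<phi> z * g z))^2 - C^2 * (cmod (\<phi> z))^2" for z
    by (simp add: h_def \<phi>_def)
  have ih: "integrable M h"
    unfolding hpt[abs_def] using L2_int[OF pg] L2_int[OF Linf_L2[OF \<phi>L]] by auto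
  have "(LINT z|M. h z) = (LINT z|M. (cmod (\<phi> z * g z))^2) - C^2 * (LINT z|M. (cmod (\<phi> z))^2)"
    unfolding hpt[abs_def] using L2_int[OF pg] L2_int[OF Linf_L2[OF \<phi>L]] by simp
  then have "(LINT z|M. h z) \<le> 0" using le by simp
  moreover have h0: "\<And>z. 0 \<le> h z"
    unfolding h_def using C(2) by (auto intro!: power_mono)
  ultimately have "(LINT z|M. h z) = 0" using integral_nonneg_AE[of h M] by (simp add: order_antisym)
  then have "AE z in M. h z = 0" using ih h0 by (subst (asm) integral_nonneg_eq_0_iff_AE) auto
  then have "AE z in M. cmod (g z) \<le> C"
  proof eventually_elim
    case (elim z)
    show ?case
    proof (rule ccontr)
      assume "\<not> cmod (g z) \<le> C"
      then have "C < cmod (g z)" by simp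
      then have "C^2 < (cmod (g z))^2" using C(2) by (intro power_strict_mono) auto
      then show False using elim \<open>C < cmod (g z)\<close> by (simp add: h_def)
    qed
  qed
  then show ?thesis unfolding g_def[symmetric] Linf_def using gm by (auto simp: borel_M_iff)
qed

lemma commutes_adj:
  assumes X: "bounded_op X" and cX: "commutes_Linf X"
  shows "commutes_Linf (adj X)"
  unfolding commutes_Linf_def
proof (intro allI impI)
  fix \<phi> f assume \<phi>: "Linf \<phi>" and f: "L2 f"
  have Y: "bounded_op (adj X)" using adj_bop[OF X] .
  show "ae_eq (adj X (\<lambda>z. \<phi> z * f z)) (\<lambda>z. \<phi> z * adj X f z)"
  proof (rule ext_inner2')
    show "L2 (adj X (\<lambda>z. \<phi> z * f z))" using bop_L2[OF Y L2_mult_Linf[OF \<phi> f]] .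
    show "L2 (\<lambda>z. \<phi> z * adj X f z)" using L2_mult_Linf[OF \<phi> bop_L2[OF Y f]] .
    fix h assume h: "L2 h"
    have ch: "L2 (\<lambda>z. cnj (\<phi> z) * h z)" using L2_mult_Linf[OF Linf_cnj[OF \<phi>] h] .
    have "inner2 h (adj X (\<lambda>z. \<phi> z * f z)) = inner2 (X h) (\<lambda>z. \<phi> z * f z)"
      using adj_inner[OF X h L2_mult_Linf[OF \<phi> f]] by simp
    also have "\<dots> = inner2 (\<lambda>z. cnj (\<phi> z) * X h z) f"
      using inner2_mult[of "\<lambda>z. cnj (\<phi> z)" "X h" f] by simp
    also have "\<dots> = inner2 (X (\<lambda>z. cnj (\<phi> z) * h z)) f"
      using cX Linf_cnj[OF \<phi>] h f bop_L2[OF X] ch L2_mult_Linf[OF Linf_cnj[OF \<phi>] bop_L2[OF X h]]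
      unfolding commutes_Linf_def by (intro inner2_ae1) (auto intro: ae_eq_sym)
    also have "\<dots> = inner2 (\<lambda>z. cnj (\<phi> z) * h z) (adj X f)"
      using adj_inner[OF X ch f] .
    also have "\<dots> = inner2 h (\<lambda>z. \<phi> z * adj X f z)"
      using inner2_mult[of "\<lambda>z. cnj (\<phi> z)" h "adj X f"] by simp
    finally show "inner2 h (adj X (\<lambda>z. \<phi> z * f z)) = inner2 h (\<lambda>z. \<phi> z * adj X f z)" .
  qed
qed

lemma commutant:
  assumes X: "bounded_op X" and cX: "commutes_Linf X"
  shows "Linf (X (\<lambda>z. 1)) \<and> (\<forall>f. L2 f \<longrightarrow> ae_eq (X f) (\<lambda>z. X (\<lambda>z. 1) z * f z))"
proof -
  define g where "g = X (\<lambda>z. 1)"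
  define k where "k = adj X (\<lambda>z. 1)"
  have Y: "bounded_op (adj X)" using adj_bop[OF X] .
  have cY: "commutes_Linf (adj X)" using commutes_adj[OF X cX] .
  have gL: "Linf g" unfolding g_def using commutes_Linf_gen[OF X cX] .
  have kL: "Linf k" unfolding k_def using commutes_Linf_gen[OF Y cY] .
  have gm[measurable]: "g \<in> borel_measurable borel" using Linf_meas[OF gL] .
  have km[measurable]: "k \<in> borel_measurable borel" using Linf_meas[OF kL] .
  have Xphi: "ae_eq (X \<phi>) (\<lambda>z. \<phi> z * g z)" if "Linf \<phi>" for \<phi>
    unfolding g_def using commutes_one[OF cX that] .
  have Yphi: "ae_eq (adj X \<phi>) (\<lambda>z. \<phi> z * k z)" if "Linf \<phi>" for \<phi>
    unfolding k_def using commutes_one[OF cY that] .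
  define d where "d = (\<lambda>z. g z - cnj (k z))"
  have dL: "Linf d" unfolding d_def using Linf_diff[OF gL Linf_cnj[OF kL]] .
  have cdL: "Linf (\<lambda>z. cnj (d z))" using Linf_cnj[OF dL] .
  have "inner2 (X (\<lambda>z. cnj (d z))) (\<lambda>z. 1) = inner2 (\<lambda>z. cnj (d z)) (adj X (\<lambda>z. 1))"
    using adj_inner[OF X Linf_L2[OF cdL]] by simp
  moreover have "inner2 (X (\<lambda>z. cnj (d z))) (\<lambda>z. 1) = inner2 (\<lambda>z. cnj (d z) * g z) (\<lambda>z. 1)"
    using Xphi[OF cdL] bop_L2[OF X Linf_L2[OF cdL]] L2_mult_Linf[OF cdL Linf_L2[OF gL]]
    by (intro inner2_ae1) auto
  ultimately have eq: "inner2 (\<lambda>z. cnj (d z) * g z) (\<lambda>z. 1) = inner2 (\<lambda>z. cnj (d z)) k"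
    unfolding k_def by simp
  have "inner2 d d = inner2 (\<lambda>z. cnj (d z) * g z) (\<lambda>z. 1) - inner2 (\<lambda>z. cnj (d z)) k"
  proof -
    have i1: "integrable M (\<lambda>z. cnj (d z) * g z)"
      using L2_integrable[OF L2_mult_Linf[OF cdL Linf_L2[OF gL]]] .
    have i2: "integrable M (\<lambda>z. cnj (d z) * cnj (k z))"
      using L2_integrable_prod[OF Linf_L2[OF cdL] Linf_L2[OF kL]] .
    have "inner2 d d = (LINT z|M. cnj (d z) * g z - cnj (d z) * cnj (k z))"
      unfolding inner2_def d_def by (simp add: algebra_simps)
    also have "\<dots> = (LINT z|M. cnj (d z) * g z) - (LINT z|M. cnj (d z) * cnj (k z))"
      using i1 i2 by simp
    finally show ?thesis unfolding inner2_def by simp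
  qed
  then have "inner2 d d = 0" using eq by simp
  then have "norm2 d = 0" using inner2_self[OF Linf_L2[OF dL]] by simp
  then have gk: "ae_eq g (\<lambda>z. cnj (k z))"
    using norm2_eq_0[OF Linf_L2[OF dL]] unfolding d_def ae_eq_def by (auto elim: AE_mp)
  have main: "ae_eq (X f) (\<lambda>z. g z * f z)" if f: "L2 f" for f
  proof -
    have D: "L2 (\<lambda>z. X f z - g z * f z)"
      using L2_minus[OF bop_L2[OF X f] L2_mult_Linf[OF gL f]] .
    have "ae_eq (\<lambda>z. X f z - g z * f z) (\<lambda>z. 0)"
    proof (rule orth_Linf[OF D])
      fix \<psi> assume \<psi>: "Linf \<psi>"
      have "inner2 (X f) \<psi> = inner2 f (adj X \<psi>)" using adj_inner[OF X f Linf_L2[OF \<psi>]] .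
      also have "\<dots> = inner2 f (\<lambda>z. \<psi> z * k z)"
        using Yphi[OF \<psi>] f bop_L2[OF Y Linf_L2[OF \<psi>]] L2_mult_Linf[OF \<psi> Linf_L2[OF kL]]
        by (intro inner2_ae2) auto
      also have "\<dots> = (LINT z|M. f z * cnj (\<psi> z) * cnj (k z))"
        unfolding inner2_def by (simp add: algebra_simps)
      also have "\<dots> = (LINT z|M. g z * f z * cnj (\<psi> z))"
      proof (rule integral_cong_AE)
        show "(\<lambda>z. f z * cnj (\<psi> z) * cnj (k z)) \<in> borel_measurable M"
          using L2_meas[OF f] Linf_meas[OF \<psi>] by measurable
        show "(\<lambda>z. g z * f z * cnj (\<psi> z)) \<in> borel_measurable M"
          using L2_meas[OF f] Linf_meas[OF \<psi>] by measurable
        show "AE z in M. f z * cnj (\<psi> z) * cnj (k z) = g z * f z * cnj (\<psi> z)"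
          using gk unfolding ae_eq_def by eventually_elim simp
      qed
      also have "\<dots> = inner2 (\<lambda>z. g z * f z) \<psi>" unfolding inner2_def by simp
      finally have "inner2 (X f) \<psi> = inner2 (\<lambda>z. g z * f z) \<psi>" .
      then show "inner2 (\<lambda>z. X f z - g z * f z) \<psi> = 0"
        using bop_L2[OF X f] L2_mult_Linf[OF gL f] Linf_L2[OF \<psi>] by (simp add: inner2_minus1)
    qed
    then show ?thesis unfolding ae_eq_def by eventually_elim simp
  qed
  show ?thesis using gL main unfolding g_def by blast
qed




lemma unit_Linf: "unitary_Linf N u \<Longrightarrow> i < N \<Longrightarrow> j < N \<Longrightarrow> Linf (u i j)"
  unfolding unitary_Linf_def by blast

lemma unit_row: "unitary_Linf N u \<Longrightarrow>
   AE z in M. \<forall>i\<in>{..<N}. \<forall>j\<in>{..<N}. (\<Sum>k<N. u i k z * cnj (u j k z)) = (if i = j then 1 else 0)"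
proof -
  assume u: "unitary_Linf N u"
  have "\<forall>i\<in>{..<N}. \<forall>j\<in>{..<N}. AE z in M. (\<Sum>k<N. u i k z * cnj (u j k z)) = (if i = j then 1 else 0)"
    using u unfolding unitary_Linf_def ae_eq_def by auto
  then have "AE z in M. \<forall>i\<in>{..<N}. \<forall>j\<in>{..<N}. (\<Sum>k<N. u i k z * cnj (u j k z)) = (if i = j then 1 else 0)"
    by (intro eventually_ball_finite ballI) auto
  then show ?thesis .
qed

lemma unit_col: "unitary_Linf N u \<Longrightarrow>
   AE z in M. \<forall>i\<in>{..<N}. \<forall>j\<in>{..<N}. (\<Sum>k<N. cnj (u k i z) * u k j z) = (if i = j then 1 else 0)"
proof -
  assume u: "unitary_Linf N u"
  have "\<forall>i\<in>{..<N}. \<forall>j\<in>{..<N}. AE z in M. (\<Sum>k<N. cnj (u k i z) * u k j z) = (if i = j then 1 else 0)"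
    using u unfolding unitary_Linf_def ae_eq_def by auto
  then have "AE z in M. \<forall>i\<in>{..<N}. \<forall>j\<in>{..<N}. (\<Sum>k<N. cnj (u k i z) * u k j z) = (if i = j then 1 else 0)"
    by (intro eventually_ball_finite ballI) auto
  then show ?thesis .
qed

lemma linked_op: "linked N S1 S2 u \<Longrightarrow> j < N \<Longrightarrow> L2 f \<Longrightarrow>
    ae_eq (S2 j f) (\<lambda>z. \<Sum>i<N. S1 i (\<lambda>w. u i j w * f w) z)"
  unfolding linked_def op_eq_def mult_op_def by blast

locale two_cuntz =
  fixes N :: nat and S1 S2 :: "nat \<Rightarrow> op" and u :: "nat \<Rightarrow> nat \<Rightarrow> complex \<Rightarrow> complex"
  assumes S1: "cuntz_family N S1" and S2: "cuntz_family N S2"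
    and u: "unitary_Linf N u" and lk: "linked N S1 S2 u"
begin

abbreviation "A1 i \<equiv> adj (S1 i)"
abbreviation "A2 i \<equiv> adj (S2 i)"

lemma B1: "i < N \<Longrightarrow> bounded_op (S1 i)" using cf_bop[OF S1] .
lemma B2: "i < N \<Longrightarrow> bounded_op (S2 i)" using cf_bop[OF S2] .
lemma BA1: "i < N \<Longrightarrow> bounded_op (A1 i)" using cf_adj_bop[OF S1] .
lemma BA2: "i < N \<Longrightarrow> bounded_op (A2 i)" using cf_adj_bop[OF S2] .
lemma uL: "i < N \<Longrightarrow> j < N \<Longrightarrow> Linf (u i j)" using unit_Linf[OF u] .

lemma Bf_L2: "L2 f \<Longrightarrow> j < N \<Longrightarrow> L2 (\<lambda>v. \<Sum>k<N. cnj (u k j v) * A1 k f v)"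
  by (intro L2_sum L2_mult_Linf Linf_cnj uL bop_L2[OF BA1]) auto

lemma linked_adj:
  assumes j: "j < N" and g: "L2 g"
  shows "ae_eq (A2 j g) (\<lambda>v. \<Sum>k<N. cnj (u k j v) * A1 k g v)"
proof (rule adj_unique[OF B2[OF j], where A="\<lambda>g v. \<Sum>k<N. cnj (u k j v) * A1 k g v"])
  fix g :: "complex \<Rightarrow> complex" assume "L2 g" then show "L2 (\<lambda>v. \<Sum>k<N. cnj (u k j v) * A1 k g v)"
    using Bf_L2 j by blast
next
  fix f g :: "complex \<Rightarrow> complex" assume f: "L2 f" and g: "L2 g"
  have uf: "L2 (\<lambda>w. u i j w * f w)" if "i < N" for i using L2_mult_Linf[OF uL[OF that j] f] .
  have "inner2 (S2 j f) g = inner2 (\<lambda>z. \<Sum>i<N. S1 i (\<lambda>w. u i j w * f w) z) g"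
    using linked_op[OF lk j f] bop_L2[OF B2[OF j] f] g uf
    by (intro inner2_ae1) (auto intro!: L2_sum bop_L2[OF B1])
  also have "\<dots> = (\<Sum>i<N. inner2 (S1 i (\<lambda>w. u i j w * f w)) g)"
    using g uf by (intro inner2_sum1) (auto intro!: bop_L2[OF B1])
  also have "\<dots> = (\<Sum>i<N. inner2 (\<lambda>w. u i j w * f w) (A1 i g))"
    using g uf by (intro sum.cong refl adj_inner[OF B1]) auto
  also have "\<dots> = (\<Sum>i<N. inner2 f (\<lambda>v. cnj (u i j v) * A1 i g v))"
    by (simp add: inner2_mult)
  also have "\<dots> = inner2 f (\<lambda>v. \<Sum>k<N. cnj (u k j v) * A1 k g v)"
    using f g by (intro inner2_sum2[symmetric]) (auto intro!: L2_mult_Linf Linf_cnj uL j bop_L2[OF BA1])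
  finally show "inner2 (S2 j f) g = inner2 f (\<lambda>v. \<Sum>k<N. cnj (u k j v) * A1 k g v)" .
qed (rule g)

end




lemma alg1: "(\<Sum>j<N. x j * (p * (\<Sum>k<N. y k j * a k))) = p * (\<Sum>k<(N::nat). (\<Sum>j<N. x j * y k j) * (a k::'a::comm_ring))"
proof -
  have "(\<Sum>j<N. x j * (p * (\<Sum>k<N. y k j * a k))) = (\<Sum>j<N. \<Sum>k<N. p * (x j * y k j * a k))"
    by (simp add: sum_distrib_left mult_ac)
  also have "\<dots> = (\<Sum>k<N. \<Sum>j<N. p * (x j * y k j * a k))" by (rule sum.swap)
  also have "\<dots> = p * (\<Sum>k<N. (\<Sum>j<N. x j * y k j) * a k)"
    by (simp add: sum_distrib_left sum_distrib_right mult_ac)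
  finally show ?thesis .
qed

lemma alg2: "i < N \<Longrightarrow> (\<Sum>k<(N::nat). (if i = k then 1 else 0) * (a k::'a::comm_ring_1)) = a i"
proof -
  assume i: "i < N"
  have "\<And>k. (if i = k then 1 else 0) * a k = (if i = k then a k else 0)" by simp
  then show ?thesis using i by (simp add: sum.delta)
qed

context two_cuntz
begin

lemma alpha_expand:
  assumes T: "bounded_op T" and f: "L2 f"
  shows "ae_eq (alphaS N S2 T f)
     (\<lambda>z. \<Sum>i<N. S1 i (\<lambda>w. \<Sum>j<N. u i j w * T (\<lambda>v. \<Sum>k<N. cnj (u k j v) * A1 k f v) w) z)"
proof -
  define B where "B = (\<lambda>j v. \<Sum>k<N. cnj (u k j v) * A1 k f v)"
  have BL: "j < N \<Longrightarrow> L2 (B j)" for j unfolding B_def using Bf_L2[OF f] .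
  have TBL: "j < N \<Longrightarrow> L2 (T (B j))" for j using bop_L2[OF T BL] .
  have uTB: "i < N \<Longrightarrow> j < N \<Longrightarrow> L2 (\<lambda>w. u i j w * T (B j) w)" for i j
    using L2_mult_Linf[OF uL TBL] .
  have "ae_eq (alphaS N S2 T f) (\<lambda>z. \<Sum>j<N. S2 j (T (B j)) z)"
    unfolding alphaS_def
  proof (rule ae_eq_sum)
    fix j assume "j \<in> {..<N}" then have j: "j < N" by simp
    have "ae_eq (T (A2 j f)) (T (B j))"
      using linked_adj[OF j f] bop_L2[OF BA2[OF j] f] BL[OF j] unfolding B_def by (intro bop_ae[OF T]) auto
    then show "ae_eq (S2 j (T (A2 j f))) (S2 j (T (B j)))"
      using bop_L2[OF T bop_L2[OF BA2[OF j] f]] TBL[OF j] by (intro bop_ae[OF B2[OF j]]) auto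
  qed simp
  also have "ae_eq \<dots> (\<lambda>z. \<Sum>j<N. \<Sum>i<N. S1 i (\<lambda>w. u i j w * T (B j) w) z)"
    by (rule ae_eq_sum) (auto intro!: linked_op[OF lk] TBL)
  also have "(\<lambda>z. \<Sum>j<N. \<Sum>i<N. S1 i (\<lambda>w. u i j w * T (B j) w) z) =
             (\<lambda>z. \<Sum>i<N. \<Sum>j<N. S1 i (\<lambda>w. u i j w * T (B j) w) z)"
    by (rule ext, rule sum.swap)
  also have "ae_eq \<dots> (\<lambda>z. \<Sum>i<N. S1 i (\<lambda>w. \<Sum>j<N. u i j w * T (B j) w) z)"
  proof (rule ae_eq_sum)
    fix i assume "i \<in> {..<N}" then have i: "i < N" by simp
    show "ae_eq (\<lambda>z. \<Sum>j<N. S1 i (\<lambda>w. u i j w * T (B j) w) z) (S1 i (\<lambda>w. \<Sum>j<N. u i j w * T (B j) w))"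
      using bop_sum[OF B1[OF i], of "{..<N}" "\<lambda>j w. u i j w * T (B j) w"] uTB[OF i]
      by (auto intro: ae_eq_sym)
  qed simp
  finally show ?thesis unfolding B_def .
qed

lemma alpha_mult:
  assumes \<phi>: "Linf \<phi>"
  shows "op_eq (alphaS N S2 (mult_op \<phi>)) (alphaS N S1 (mult_op \<phi>))"
  unfolding op_eq_def
proof (intro allI impI)
  fix f assume f: "L2 f"
  have "ae_eq (alphaS N S2 (mult_op \<phi>) f)
     (\<lambda>z. \<Sum>i<N. S1 i (\<lambda>w. \<Sum>j<N. u i j w * (\<phi> w * (\<Sum>k<N. cnj (u k j w) * A1 k f w))) z)"
    using alpha_expand[OF mult_op_bop[OF \<phi>] f] by (simp add: mult_op_def)
  also have "ae_eq \<dots> (\<lambda>z. \<Sum>i<N. S1 i (\<lambda>w. \<phi> w * A1 i f w) z)"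
  proof (rule ae_eq_sum)
    fix i assume "i \<in> {..<N}" then have i: "i < N" by simp
    have "ae_eq (\<lambda>w. \<Sum>j<N. u i j w * (\<phi> w * (\<Sum>k<N. cnj (u k j w) * A1 k f w))) (\<lambda>w. \<phi> w * A1 i f w)"
      using unit_row[OF u] unfolding ae_eq_def
    proof eventually_elim
      case (elim w)
      have "(\<Sum>j<N. u i j w * (\<phi> w * (\<Sum>k<N. cnj (u k j w) * A1 k f w))) =
            \<phi> w * (\<Sum>k<N. (\<Sum>j<N. u i j w * cnj (u k j w)) * A1 k f w)" by (rule alg1)
      also have "\<dots> = \<phi> w * (\<Sum>k<N. (if i = k then 1 else 0) * A1 k f w)"
        using elim i by (intro arg_cong[where f="\<lambda>x. \<phi> w * x"] sum.cong refl) auto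
      also have "\<dots> = \<phi> w * A1 i f w" using alg2[OF i, of "\<lambda>k. A1 k f w"] by simp
      finally show ?case .
    qed
    then show "ae_eq (S1 i (\<lambda>w. \<Sum>j<N. u i j w * (\<phi> w * (\<Sum>k<N. cnj (u k j w) * A1 k f w)))) (S1 i (\<lambda>w. \<phi> w * A1 i f w))"
      using i f \<phi> by (intro bop_ae[OF B1[OF i]])
        (auto intro!: L2_sum L2_mult_Linf uL Linf_cnj bop_L2[OF BA1])
  qed simp
  also have "(\<lambda>z. \<Sum>i<N. S1 i (\<lambda>w. \<phi> w * A1 i f w) z) = alphaS N S1 (mult_op \<phi>) f"
    by (simp add: alphaS_def mult_op_def)
  finally show "ae_eq (alphaS N S2 (mult_op \<phi>) f) (alphaS N S1 (mult_op \<phi>) f)" .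
qed

lemma intertwines_iff: "intertwines N S1 a \<longleftrightarrow> intertwines N S2 a"
  unfolding intertwines_def op_eq_def
  using alpha_mult unfolding op_eq_def
  by (meson ae_eq_sym ae_eq_trans)

lemma const_imp_alpha:
  assumes c: "constant_matrix N u" and T: "bounded_op T"
  shows "op_eq (alphaS N S1 T) (alphaS N S2 T)"
  unfolding op_eq_def
proof (intro allI impI)
  fix f assume f: "L2 f"
  obtain c where c: "\<And>i j. i < N \<Longrightarrow> j < N \<Longrightarrow> ae_eq (u i j) (\<lambda>z. c i j)"
    using assms unfolding constant_matrix_def by blast
  have uc: "AE z in M. \<forall>i\<in>{..<N}. \<forall>j\<in>{..<N}. u i j z = c i j"
    using c unfolding ae_eq_def by (intro eventually_ball_finite ballI) auto
  have cu: "(\<Sum>j<N. c i j * cnj (c k j)) = (if i = k then 1 else 0)" if "i < N" "k < N" for i k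
  proof -
    have "AE z in M. (\<Sum>j<N. c i j * cnj (c k j)) = (if i = k then 1 else 0)"
      using uc unit_row[OF u]
    proof eventually_elim
      case (elim z)
      have "(\<Sum>j<N. c i j * cnj (c k j)) = (\<Sum>j<N. u i j z * cnj (u k j z))"
        using elim that by (intro sum.cong refl) auto
      also have "\<dots> = (if i = k then 1 else 0)" using elim that by auto
      finally show ?case .
    qed
    then show ?thesis by (simp add: C.AE_const)
  qed
  define B where "B = (\<lambda>j v. \<Sum>k<N. cnj (u k j v) * A1 k f v)"
  have BL: "j < N \<Longrightarrow> L2 (B j)" for j unfolding B_def using Bf_L2[OF f] .
  have A1L: "k < N \<Longrightarrow> L2 (A1 k f)" for k using bop_L2[OF BA1 f] .
  have TB: "ae_eq (T (B j)) (\<lambda>w. \<Sum>k<N. cnj (c k j) * T (A1 k f) w)" if j: "j < N" for j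
  proof -
    have "ae_eq (B j) (\<lambda>v. \<Sum>k<N. cnj (c k j) * A1 k f v)"
      using uc unfolding ae_eq_def B_def by eventually_elim (use j in auto)
    then have "ae_eq (T (B j)) (T (\<lambda>v. \<Sum>k<N. cnj (c k j) * A1 k f v))"
      using BL[OF j] A1L by (intro bop_ae[OF T]) (auto intro!: L2_sum L2_scale)
    also have "ae_eq \<dots> (\<lambda>w. \<Sum>k<N. T (\<lambda>v. cnj (c k j) * A1 k f v) w)"
      using A1L by (intro bop_sum[OF T]) (auto intro!: L2_scale)
    also have "ae_eq \<dots> (\<lambda>w. \<Sum>k<N. cnj (c k j) * T (A1 k f) w)"
      using A1L by (intro ae_eq_sum bop_scale[OF T]) auto
    finally show ?thesis .
  qed
  have "ae_eq (alphaS N S2 T f) (\<lambda>z. \<Sum>i<N. S1 i (\<lambda>w. \<Sum>j<N. u i j w * T (B j) w) z)"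
    using alpha_expand[OF T f] unfolding B_def .
  also have "ae_eq \<dots> (\<lambda>z. \<Sum>i<N. S1 i (T (A1 i f)) z)"
  proof (rule ae_eq_sum)
    fix i assume "i \<in> {..<N}" then have i: "i < N" by simp
    have "AE w in M. \<forall>j\<in>{..<N}. T (B j) w = (\<Sum>k<N. cnj (c k j) * T (A1 k f) w)"
      using TB unfolding ae_eq_def by (intro eventually_ball_finite ballI) auto
    then have "ae_eq (\<lambda>w. \<Sum>j<N. u i j w * T (B j) w) (T (A1 i f))"
      using uc unfolding ae_eq_def
    proof eventually_elim
      case (elim w)
      have "(\<Sum>j<N. u i j w * T (B j) w) = (\<Sum>j<N. c i j * (1 * (\<Sum>k<N. cnj (c k j) * T (A1 k f) w)))"
        using elim i by (intro sum.cong refl) auto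
      also have "\<dots> = 1 * (\<Sum>k<N. (\<Sum>j<N. c i j * cnj (c k j)) * T (A1 k f) w)" by (rule alg1)
      also have "\<dots> = (\<Sum>k<N. (if i = k then 1 else 0) * T (A1 k f) w)"
        using cu i by simp
      also have "\<dots> = T (A1 i f) w" using alg2[OF i, of "\<lambda>k. T (A1 k f) w"] by simp
      finally show ?case .
    qed
    then show "ae_eq (S1 i (\<lambda>w. \<Sum>j<N. u i j w * T (B j) w)) (S1 i (T (A1 i f)))"
      using i BL by (intro bop_ae[OF B1[OF i]])
        (auto intro!: L2_sum L2_mult_Linf uL bop_L2[OF T] A1L)
  qed simp
  finally show "ae_eq (alphaS N S1 T f) (alphaS N S2 T f)"
    unfolding alphaS_def by (rule ae_eq_sym)
qed

end




definition T0 :: op where "T0 = (\<lambda>f z. inner2 f (\<lambda>z. 1))"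

lemma norm2_const: "norm2 (\<lambda>z. a) = cmod a"
  using norm2_scale[of "\<lambda>z. 1" a] norm2_one by simp

lemma T0_bop: "bounded_op T0"
  unfolding bounded_op_def T0_def
proof (intro conjI allI impI)
  fix f g assume "L2 f" "L2 g" "ae_eq f g"
  then show "ae_eq (\<lambda>z. inner2 f (\<lambda>z. 1)) (\<lambda>z. inner2 g (\<lambda>z. 1))"
    using inner2_ae1[of f g "\<lambda>z. 1"] by simp
next
  fix f g c assume "L2 f" "L2 g"
  then show "ae_eq (\<lambda>z. inner2 (\<lambda>z. c * f z + g z) (\<lambda>z. 1)) (\<lambda>z. c * inner2 f (\<lambda>z. 1) + inner2 g (\<lambda>z. 1))"
    using inner2_add_scale[of f g "\<lambda>z. 1" c] by simp
next
  show "\<exists>C. \<forall>f. L2 f \<longrightarrow> norm2 (\<lambda>z. inner2 f (\<lambda>z. 1)) \<le> C * norm2 f"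
  proof (intro exI[of _ 1] allI impI)
    fix f assume f: "L2 f"
    show "norm2 (\<lambda>z. inner2 f (\<lambda>z. 1)) \<le> 1 * norm2 f"
      using Cauchy_Schwarz2[OF f L2_const[of 1]] by (simp add: norm2_const norm2_one)
  qed
qed simp

lemma T0_ae: "L2 f \<Longrightarrow> L2 g \<Longrightarrow> ae_eq f g \<Longrightarrow> T0 f = T0 g"
  unfolding T0_def using inner2_ae1[of f g "\<lambda>z. 1"] by simp

lemma T0_zero: "T0 (\<lambda>z. 0) = (\<lambda>z. 0)"
  unfolding T0_def inner2_def by simp

lemma T0_one: "T0 (\<lambda>z. 1) = (\<lambda>z. 1)"
  unfolding T0_def using inner2_self[of "\<lambda>z. 1"] norm2_one by simp

context two_cuntz
begin

lemma X_u:
  assumes k: "k < N" and j: "j < N" and f: "L2 f"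
  shows "ae_eq (A1 k (S2 j f)) (\<lambda>z. u k j z * f z)"
proof -
  have uf: "i < N \<Longrightarrow> L2 (\<lambda>w. u i j w * f w)" for i using L2_mult_Linf[OF uL[OF _ j] f] .
  have "ae_eq (A1 k (S2 j f)) (A1 k (\<lambda>z. \<Sum>i<N. S1 i (\<lambda>w. u i j w * f w) z))"
    using linked_op[OF lk j f] bop_L2[OF B2[OF j] f] uf
    by (intro bop_ae[OF BA1[OF k]]) (auto intro!: L2_sum bop_L2[OF B1])
  also have "ae_eq \<dots> (\<lambda>z. \<Sum>i<N. A1 k (S1 i (\<lambda>w. u i j w * f w)) z)"
    using uf by (intro bop_sum[OF BA1[OF k]]) (auto intro!: bop_L2[OF B1])
  also have "ae_eq \<dots> (\<lambda>z. \<Sum>i<N. (if k = i then u i j z * f z else 0))"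
    using uf by (intro ae_eq_sum cf_orth[OF S1 k]) auto
  also have "(\<lambda>z. \<Sum>i<N. (if k = i then u i j z * f z else 0)) = (\<lambda>z. u k j z * f z)"
    using k by (simp add: sum.delta)
  finally show ?thesis .
qed

lemma S2_T0:
  assumes j: "j < N" and h: "L2 h"
  shows "ae_eq (alphaS N S2 T0 (S2 j h)) (S2 j (T0 h))"
proof -
  have "ae_eq (alphaS N S2 T0 (S2 j h)) (\<lambda>z. \<Sum>i<N. (if i = j then S2 j (T0 h) z else 0))"
    unfolding alphaS_def
  proof (rule ae_eq_sum)
    fix i assume "i \<in> {..<N}" then have i: "i < N" by simp
    have Lif: "L2 (\<lambda>z. if i = j then h z else 0)" by (cases "i = j") (simp_all add: h)
    have "T0 (A2 i (S2 j h)) = T0 (\<lambda>z. if i = j then h z else 0)"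
      using cf_orth[OF S2 i j h] bop_L2[OF BA2[OF i] bop_L2[OF B2[OF j] h]] Lif
      by (intro T0_ae) auto
    moreover have "T0 (\<lambda>z. if i = j then h z else 0) = (if i = j then T0 h else (\<lambda>z. 0))"
      using T0_zero by simp
    ultimately show "ae_eq (S2 i (T0 (A2 i (S2 j h)))) (\<lambda>z. if i = j then S2 j (T0 h) z else 0)"
      using bop_zero[OF B2[OF i]] by (cases "i = j") auto
  qed simp
  also have "(\<lambda>z. \<Sum>i<N. (if i = j then S2 j (T0 h) z else 0)) = S2 j (T0 h)"
    using j by (simp add: sum.delta)
  finally show ?thesis .
qed

lemma A1_T0:
  assumes k: "k < N" and g: "L2 g"
  shows "ae_eq (A1 k (alphaS N S1 T0 g)) (T0 (A1 k g))"
proof -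
  have "ae_eq (A1 k (alphaS N S1 T0 g)) (\<lambda>z. \<Sum>i<N. A1 k (S1 i (T0 (A1 i g))) z)"
    unfolding alphaS_def by (intro bop_sum[OF BA1[OF k]]) (auto intro!: bop_L2[OF B1] bop_L2[OF T0_bop] bop_L2[OF BA1] g)
  also have "ae_eq \<dots> (\<lambda>z. \<Sum>i<N. (if k = i then T0 (A1 i g) z else 0))"
    by (intro ae_eq_sum cf_orth[OF S1 k]) (auto intro!: bop_L2[OF T0_bop] bop_L2[OF BA1] g)
  also have "(\<lambda>z. \<Sum>i<N. (if k = i then T0 (A1 i g) z else 0)) = T0 (A1 k g)"
    using k by (simp add: sum.delta)
  finally show ?thesis .
qed

lemma alpha_imp_const:
  assumes H: "\<forall>T. bounded_op T \<longrightarrow> op_eq (alphaS N S1 T) (alphaS N S2 T)"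
  shows "constant_matrix N u"
  unfolding constant_matrix_def
proof (intro exI[of _ "\<lambda>k j. inner2 (A1 k (S2 j (\<lambda>z. 1))) (\<lambda>z. 1)"] allI impI)
  fix k j assume k: "k < N" and j: "j < N"
  have one: "L2 (\<lambda>z::complex. 1::complex)" by simp
  have s1: "L2 (S2 j (\<lambda>z. 1))" using bop_L2[OF B2[OF j] one] .
  have op: "op_eq (alphaS N S1 T0) (alphaS N S2 T0)" using H T0_bop by blast
  have "ae_eq (u k j) (\<lambda>z. u k j z * 1)" by simp
  also have "ae_eq \<dots> (A1 k (S2 j (\<lambda>z. 1)))" using X_u[OF k j one] by (rule ae_eq_sym)
  also have "A1 k (S2 j (\<lambda>z. 1)) = A1 k (S2 j (T0 (\<lambda>z. 1)))" by (simp add: T0_one)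
  also have "ae_eq \<dots> (A1 k (alphaS N S2 T0 (S2 j (\<lambda>z. 1))))"
    using S2_T0[OF j one] s1 bop_L2[OF B2[OF j] bop_L2[OF T0_bop one]]
    by (intro bop_ae[OF BA1[OF k]]) (auto intro: ae_eq_sym simp: alphaS_def
        intro!: L2_sum bop_L2[OF B2] bop_L2[OF T0_bop] bop_L2[OF BA2])
  also have "ae_eq \<dots> (A1 k (alphaS N S1 T0 (S2 j (\<lambda>z. 1))))"
    using ae_eq_op_eq[OF op s1] s1
    by (intro bop_ae[OF BA1[OF k]]) (auto intro: ae_eq_sym simp: alphaS_def
        intro!: L2_sum bop_L2[OF B2] bop_L2[OF B1] bop_L2[OF T0_bop] bop_L2[OF BA2] bop_L2[OF BA1])
  also have "ae_eq \<dots> (T0 (A1 k (S2 j (\<lambda>z. 1))))" using A1_T0[OF k s1] .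
  finally show "ae_eq (u k j) (\<lambda>z. inner2 (A1 k (S2 j (\<lambda>z. 1))) (\<lambda>z. 1))" by (simp add: T0_def)
qed

end




locale two_int =
  fixes N :: nat and S1 S2 :: "nat \<Rightarrow> op" and a :: "nat \<Rightarrow> complex"
  assumes S1: "cuntz_family N S1" and S2: "cuntz_family N S2"
    and I1: "intertwines N S1 a" and I2: "intertwines N S2 a"
begin

abbreviation "A1 i \<equiv> adj (S1 i)"
abbreviation "A2 i \<equiv> adj (S2 i)"

lemma B1: "i < N \<Longrightarrow> bounded_op (S1 i)" using cf_bop[OF S1] .
lemma B2: "i < N \<Longrightarrow> bounded_op (S2 i)" using cf_bop[OF S2] .
lemma BA1: "i < N \<Longrightarrow> bounded_op (A1 i)" using cf_adj_bop[OF S1] .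
lemma BA2: "i < N \<Longrightarrow> bounded_op (A2 i)" using cf_adj_bop[OF S2] .

lemma alpha_L2:
  assumes S: "cuntz_family N S" and \<phi>: "Linf \<phi>" and h: "L2 h"
  shows "L2 (alphaS N S (mult_op \<phi>) h)"
  unfolding alphaS_def mult_op_def
  by (intro L2_sum bop_L2[OF cf_bop[OF S]] L2_mult_Linf[OF \<phi>] bop_L2[OF cf_adj_bop[OF S]] h) auto

lemma X_comm:
  assumes i: "i < N" and j: "j < N"
  shows "commutes_Linf (\<lambda>f. A1 i (S2 j f))"
  unfolding commutes_Linf_def
proof (intro allI impI)
  fix \<phi> f assume \<phi>: "Linf \<phi>" and f: "L2 f"
  define h where "h = S2 j f"
  have hL: "L2 h" unfolding h_def using bop_L2[OF B2[OF j] f] .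
  have pf: "L2 (\<lambda>z. \<phi> z * f z)" using L2_mult_Linf[OF \<phi> f] .
  have e1: "ae_eq (alphaS N S2 (mult_op \<phi>) h) (S2 j (\<lambda>z. \<phi> z * f z))"
  proof -
    have "ae_eq (alphaS N S2 (mult_op \<phi>) h) (\<lambda>z. \<Sum>k<N. (if k = j then S2 j (\<lambda>z. \<phi> z * f z) z else 0))"
      unfolding alphaS_def mult_op_def
    proof (rule ae_eq_sum)
      fix k assume "k \<in> {..<N}" then have k: "k < N" by simp
      have Lif: "L2 (\<lambda>w. \<phi> w * (if k = j then f w else 0))"
        by (cases "k = j") (simp_all add: pf)
      have "ae_eq (S2 k (\<lambda>w. \<phi> w * A2 k h w)) (S2 k (\<lambda>w. \<phi> w * (if k = j then f w else 0)))"
        using ae_eq_mult[OF cf_orth[OF S2 k j f]] Lif L2_mult_Linf[OF \<phi> bop_L2[OF BA2[OF k] hL]]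
        unfolding h_def by (intro bop_ae[OF B2[OF k]]) auto
      also have "ae_eq (S2 k (\<lambda>w. \<phi> w * (if k = j then f w else 0))) (\<lambda>z. if k = j then S2 j (\<lambda>z. \<phi> z * f z) z else 0)"
        using bop_zero[OF B2[OF k]] by (cases "k = j") auto
      finally show "ae_eq (S2 k (\<lambda>w. \<phi> w * A2 k h w)) (\<lambda>z. if k = j then S2 j (\<lambda>z. \<phi> z * f z) z else 0)" .
    qed simp
    also have "(\<lambda>z. \<Sum>k<N. (if k = j then S2 j (\<lambda>z. \<phi> z * f z) z else 0)) = S2 j (\<lambda>z. \<phi> z * f z)"
      using j by (simp add: sum.delta)
    finally show ?thesis .
  qed
  have e2: "ae_eq (alphaS N S2 (mult_op \<phi>) h) (mult_op (beta N a \<phi>) h)"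
    using I2 \<phi> hL unfolding intertwines_def op_eq_def by blast
  have e3: "ae_eq (alphaS N S1 (mult_op \<phi>) h) (mult_op (beta N a \<phi>) h)"
    using I1 \<phi> hL unfolding intertwines_def op_eq_def by blast
  have e123: "ae_eq (S2 j (\<lambda>z. \<phi> z * f z)) (alphaS N S1 (mult_op \<phi>) h)"
    using e1 e2 e3 by (meson ae_eq_sym ae_eq_trans)
  have e4: "ae_eq (A1 i (alphaS N S1 (mult_op \<phi>) h)) (\<lambda>z. \<phi> z * A1 i h z)"
  proof -
    have ak: "k < N \<Longrightarrow> L2 (\<lambda>w. \<phi> w * A1 k h w)" for k using L2_mult_Linf[OF \<phi> bop_L2[OF BA1 hL]] .
    have "ae_eq (A1 i (alphaS N S1 (mult_op \<phi>) h)) (\<lambda>z. \<Sum>k<N. A1 i (S1 k (\<lambda>w. \<phi> w * A1 k h w)) z)"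
      unfolding alphaS_def mult_op_def using ak
      by (intro bop_sum[OF BA1[OF i]]) (auto intro!: bop_L2[OF B1])
    also have "ae_eq \<dots> (\<lambda>z. \<Sum>k<N. (if i = k then \<phi> z * A1 k h z else 0))"
      using ak by (intro ae_eq_sum cf_orth[OF S1 i]) auto
    also have "(\<lambda>z. \<Sum>k<N. (if i = k then \<phi> z * A1 k h z else 0)) = (\<lambda>z. \<phi> z * A1 i h z)"
      using i by (simp add: sum.delta)
    finally show ?thesis .
  qed
  have "ae_eq (A1 i (S2 j (\<lambda>z. \<phi> z * f z))) (A1 i (alphaS N S1 (mult_op \<phi>) h))"
    using e123 bop_L2[OF B2[OF j] pf] alpha_L2[OF S1 \<phi> hL] by (intro bop_ae[OF BA1[OF i]])
  also note e4
  finally show "ae_eq (A1 i (S2 j (\<lambda>z. \<phi> z * f z))) (\<lambda>z. \<phi> z * A1 i (S2 j f) z)" unfolding h_def .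
qed

definition "U i j = A1 i (S2 j (\<lambda>z. 1))"

lemma U_props:
  assumes i: "i < N" and j: "j < N"
  shows "Linf (U i j) \<and> (\<forall>f. L2 f \<longrightarrow> ae_eq (A1 i (S2 j f)) (\<lambda>z. U i j z * f z))"
  unfolding U_def using commutant[OF bop_comp[OF BA1[OF i] B2[OF j]] X_comm[OF i j]] .

lemma U_Linf: "i < N \<Longrightarrow> j < N \<Longrightarrow> Linf (U i j)" using U_props by blast
lemma U_X: "i < N \<Longrightarrow> j < N \<Longrightarrow> L2 f \<Longrightarrow> ae_eq (A1 i (S2 j f)) (\<lambda>z. U i j z * f z)"
  using U_props by blast

lemma U_adj:
  assumes j: "j < N" and i: "i < N" and h: "L2 h"
  shows "ae_eq (\<lambda>z. cnj (U j i z) * h z) (A2 i (S1 j h))"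
proof (rule ext_inner2)
  show "L2 (\<lambda>z. cnj (U j i z) * h z)" using L2_mult_Linf[OF Linf_cnj[OF U_Linf[OF j i]] h] .
  show "L2 (A2 i (S1 j h))" using bop_L2[OF BA2[OF i] bop_L2[OF B1[OF j] h]] .
  fix f assume f: "L2 f"
  have "inner2 (\<lambda>z. cnj (U j i z) * h z) f = inner2 h (\<lambda>z. U j i z * f z)"
    using inner2_mult[of "\<lambda>z. cnj (U j i z)" h f] by simp
  also have "\<dots> = inner2 h (A1 j (S2 i f))"
    using U_X[OF j i f] h L2_mult_Linf[OF U_Linf[OF j i] f] bop_L2[OF BA1[OF j] bop_L2[OF B2[OF i] f]]
    by (intro inner2_ae2) (auto intro: ae_eq_sym)
  also have "\<dots> = inner2 (S1 j h) (S2 i f)"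
    using adj_inner[OF B1[OF j] h bop_L2[OF B2[OF i] f]] by simp
  also have "\<dots> = inner2 (A2 i (S1 j h)) f"
    using adj_inner'[OF B2[OF i] f bop_L2[OF B1[OF j] h]] by simp
  finally show "inner2 (\<lambda>z. cnj (U j i z) * h z) f = inner2 (A2 i (S1 j h)) f" .
qed

lemma U_linked: "linked N S1 S2 U"
  unfolding linked_def op_eq_def mult_op_def
proof (intro allI impI)
  fix j f assume j: "j < N" and f: "L2 f"
  have s: "L2 (S2 j f)" using bop_L2[OF B2[OF j] f] .
  have "ae_eq (\<lambda>z. \<Sum>i<N. S1 i (\<lambda>w. U i j w * f w) z) (\<lambda>z. \<Sum>i<N. S1 i (A1 i (S2 j f)) z)"
  proof (rule ae_eq_sum)
    fix i assume "i \<in> {..<N}" then have i: "i < N" by simp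
    show "ae_eq (S1 i (\<lambda>w. U i j w * f w)) (S1 i (A1 i (S2 j f)))"
      using U_X[OF i j f] L2_mult_Linf[OF U_Linf[OF i j] f] bop_L2[OF BA1[OF i] s]
      by (intro bop_ae[OF B1[OF i]]) (auto intro: ae_eq_sym)
  qed simp
  also have "ae_eq \<dots> (S2 j f)" using cf_sum[OF S1 s] .
  finally show "ae_eq (S2 j f) (\<lambda>z. \<Sum>i<N. S1 i (\<lambda>w. U i j w * f w) z)" by (rule ae_eq_sym)
qed

lemma U_row:
  assumes i: "i < N" and j: "j < N"
  shows "ae_eq (\<lambda>z. \<Sum>k<N. U i k z * cnj (U j k z)) (\<lambda>z. if i = j then 1 else 0)"
proof -
  have one: "L2 (\<lambda>z::complex. 1::complex)" by simp
  have s: "L2 (S1 j (\<lambda>z. 1))" using bop_L2[OF B1[OF j] one] .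
  have ak: "k < N \<Longrightarrow> L2 (A2 k (S1 j (\<lambda>z. 1)))" for k using bop_L2[OF BA2 s] .
  have "ae_eq (\<lambda>z. \<Sum>k<N. U i k z * cnj (U j k z)) (\<lambda>z. \<Sum>k<N. U i k z * A2 k (S1 j (\<lambda>z. 1)) z)"
  proof (rule ae_eq_sum)
    fix k assume "k \<in> {..<N}" then have k: "k < N" by simp
    show "ae_eq (\<lambda>z. U i k z * cnj (U j k z)) (\<lambda>z. U i k z * A2 k (S1 j (\<lambda>z. 1)) z)"
      using ae_eq_mult[OF U_adj[OF j k one], of "U i k"] by simp
  qed simp
  also have "ae_eq \<dots> (\<lambda>z. \<Sum>k<N. A1 i (S2 k (A2 k (S1 j (\<lambda>z. 1)))) z)"
    using ak by (intro ae_eq_sum ae_eq_sym[OF U_X[OF i]]) auto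
  also have "ae_eq \<dots> (A1 i (\<lambda>z. \<Sum>k<N. S2 k (A2 k (S1 j (\<lambda>z. 1))) z))"
    using ak by (intro ae_eq_sym[OF bop_sum[OF BA1[OF i]]]) (auto intro!: bop_L2[OF B2])
  also have "ae_eq \<dots> (A1 i (S1 j (\<lambda>z. 1)))"
    using cf_sum[OF S2 s] s ak by (intro bop_ae[OF BA1[OF i]]) (auto intro!: L2_sum bop_L2[OF B2])
  also have "ae_eq \<dots> (\<lambda>z. if i = j then 1 else 0)"
    using cf_orth[OF S1 i j one] by simp
  finally show ?thesis .
qed

lemma U_col:
  assumes i: "i < N" and j: "j < N"
  shows "ae_eq (\<lambda>z. \<Sum>k<N. cnj (U k i z) * U k j z) (\<lambda>z. if i = j then 1 else 0)"
proof -
  have one: "L2 (\<lambda>z::complex. 1::complex)" by simp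
  have s: "L2 (S2 j (\<lambda>z. 1))" using bop_L2[OF B2[OF j] one] .
  have uk: "k < N \<Longrightarrow> L2 (U k j)" for k using Linf_L2[OF U_Linf[OF _ j]] .
  have "ae_eq (\<lambda>z. \<Sum>k<N. cnj (U k i z) * U k j z) (\<lambda>z. \<Sum>k<N. A2 i (S1 k (U k j)) z)"
    using uk by (intro ae_eq_sum U_adj[OF _ i]) auto
  also have "(\<lambda>z. \<Sum>k<N. A2 i (S1 k (U k j)) z) = (\<lambda>z. \<Sum>k<N. A2 i (S1 k (A1 k (S2 j (\<lambda>z. 1)))) z)"
    by (simp add: U_def)
  also have "ae_eq \<dots> (A2 i (\<lambda>z. \<Sum>k<N. S1 k (A1 k (S2 j (\<lambda>z. 1))) z))"
    using s by (intro ae_eq_sym[OF bop_sum[OF BA2[OF i]]]) (auto intro!: bop_L2[OF B1] bop_L2[OF BA1])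
  also have "ae_eq \<dots> (A2 i (S2 j (\<lambda>z. 1)))"
    using cf_sum[OF S1 s] s by (intro bop_ae[OF BA2[OF i]]) (auto intro!: L2_sum bop_L2[OF B1] bop_L2[OF BA1])
  also have "ae_eq \<dots> (\<lambda>z. if i = j then 1 else 0)"
    using cf_orth[OF S2 i j one] by simp
  finally show ?thesis .
qed

lemma exists_u: "\<exists>u. unitary_Linf N u \<and> linked N S1 S2 u"
  using U_Linf U_row U_col U_linked unfolding unitary_Linf_def by blast

end



theorem corollary5p3:
  fixes N :: nat and a :: "nat \<Rightarrow> complex" and S1 S2 :: "nat \<Rightarrow> op"
  assumes zeros: "\<forall>j<N. cmod (a j) < 1"
  shows "(cuntz_family N S1 \<and> cuntz_family N S2 \<and> intertwines N S1 a \<and> intertwines N S2 a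
            \<longrightarrow> (\<exists>u. unitary_Linf N u \<and> linked N S1 S2 u))
       \<and> (\<forall>u. cuntz_family N S1 \<and> cuntz_family N S2 \<and> unitary_Linf N u \<and> linked N S1 S2 u
            \<longrightarrow> ((intertwines N S1 a \<longleftrightarrow> intertwines N S2 a) \<and>
                 ((\<forall>T. bounded_op T \<longrightarrow> op_eq (alphaS N S1 T) (alphaS N S2 T))
                    \<longleftrightarrow> constant_matrix N u)))"
proof (intro conjI allI impI)
  assume H: "cuntz_family N S1 \<and> cuntz_family N S2 \<and> intertwines N S1 a \<and> intertwines N S2 a"
  interpret two_int N S1 S2 a using H by unfold_locales auto
  show "\<exists>u. unitary_Linf N u \<and> linked N S1 S2 u" by (rule exists_u)
next
  fix u assume H: "cuntz_family N S1 \<and> cuntz_family N S2 \<and> unitary_Linf N u \<and> linked N S1 S2 u"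
  interpret two_cuntz N S1 S2 u using H by unfold_locales auto
  show "intertwines N S1 a \<longleftrightarrow> intertwines N S2 a" by (rule intertwines_iff)
  show "(\<forall>T. bounded_op T \<longrightarrow> op_eq (alphaS N S1 T) (alphaS N S2 T)) \<longleftrightarrow> constant_matrix N u"
    using alpha_imp_const const_imp_alpha by blast
qed

end
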